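(* Let $\beta>n$ and let $X$ be a random variable in $\mathbb{R}^n$ with density $f$ that is $-1/\beta$-concave. Then $$h(X)\le-\log\|f\|_\infty+\beta\sum_{i=1}^n(\beta-i)^{-1},$$ where $h(X)=-\int_{\mathbb{R}^n}f\log f\,dx$ and $\|f\|_\infty$ is the essential supremum of $f$. Equality holds when $X$ has a Pareto distribution with density $f(x)=Z_n(a,\beta)^{-1}(a+x_1+\cdots+x_n)^{-\beta}$ for $x_1,\dots,x_n>0$ (and $0$ otherwise), $a>0$, $Z_n(a,\beta)$ the normalizing constant.
   Context: A function $f:\mathbb{R}^n\to[0,\infty)$ is $-1/\beta$-concave ($\beta>0$) if $f((1-\lambda)x+\lambda y)\ge\big((1-\lambda)f(x)^{-1/\beta}+\lambda f(y)^{-1/\beta}\big)^{-\beta}$ for all $x,y$ with $f(x)f(y)>0$ and all $\lambda\in[0,1]$; equivalently $f^{-1/\beta}$ is convex on the support of $f$. *)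

theory Defs
  imports "HOL-Analysis.Analysis" "HOL-Probability.Essential_Supremum"
begin

definition neg_inv_concave :: "real \<Rightarrow> ('a::real_vector \<Rightarrow> real) \<Rightarrow> bool" where
  "neg_inv_concave \<beta> f \<longleftrightarrow> (\<forall>x. f x \<ge> 0) \<and>
     (\<forall>x y l. f x * f y > 0 \<longrightarrow> l \<in> {0..1} \<longrightarrow>
        f ((1 - l) *\<^sub>R x + l *\<^sub>R y) \<ge>
          ((1 - l) * f x powr (-1/\<beta>) + l * f y powr (-1/\<beta>)) powr (-\<beta>))"

definition is_density :: "('a::euclidean_space \<Rightarrow> real) \<Rightarrow> bool" where
  "is_density f \<longleftrightarrow> f \<in> borel_measurable lborel \<and> (\<forall>x. f x \<ge> 0) \<and>
     (\<integral>\<^sup>+ x. ennreal (f x) \<partial>lborel) = 1"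

text \<open>Differential entropy h = - integral of f log f (with 0 log 0 = 0).\<close>
definition diff_entropy :: "('a::euclidean_space \<Rightarrow> real) \<Rightarrow> real" where
  "diff_entropy f = - (\<integral>x. f x * ln (f x) \<partial>lborel)"

definition ess_sup_norm :: "('a::euclidean_space \<Rightarrow> real) \<Rightarrow> ereal" where
  "ess_sup_norm f = esssup lborel (\<lambda>x. ereal \<bar>f x\<bar>)"

definition pareto_unnorm :: "real \<Rightarrow> real \<Rightarrow> real^'n::finite \<Rightarrow> real" where
  "pareto_unnorm a \<beta> x = (if \<forall>i. x $ i > 0 then (a + (\<Sum>i\<in>UNIV. x $ i)) powr (-\<beta>) else 0)"

definition pareto_Z :: "real \<Rightarrow> real \<Rightarrow> 'n::finite itself \<Rightarrow> real" where
  "pareto_Z a \<beta> _ = (\<integral>x. (pareto_unnorm a \<beta> (x :: real^'n)) \<partial>lborel)"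

definition pareto_density :: "real \<Rightarrow> real \<Rightarrow> real^'n::finite \<Rightarrow> real" where
  "pareto_density a \<beta> x = pareto_unnorm a \<beta> x / pareto_Z a \<beta> TYPE('n)"

end

theory Submission
  imports Defs "HOL-Real_Asymp.Real_Asymp"
begin

lemma tonelli_level:
  fixes u :: "'a::euclidean_space \<Rightarrow> real" and \<rho> :: "'a \<Rightarrow> ennreal" and \<phi> :: "real \<Rightarrow> ennreal"
  assumes [measurable]: "u \<in> borel_measurable borel" "\<rho> \<in> borel_measurable borel" "\<phi> \<in> borel_measurable borel"
  shows "(\<integral>\<^sup>+x. \<rho> x * (\<integral>\<^sup>+s. \<phi> s * indicator {u x..} s \<partial>lborel) \<partial>lborel)
       = (\<integral>\<^sup>+s. \<phi> s * (\<integral>\<^sup>+x. \<rho> x * indicator {x. u x \<le> s} x \<partial>lborel) \<partial>lborel)"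
proof -
  have "(\<integral>\<^sup>+x. \<rho> x * (\<integral>\<^sup>+s. \<phi> s * indicator {u x..} s \<partial>lborel) \<partial>lborel)
      = (\<integral>\<^sup>+x. (\<integral>\<^sup>+s. \<rho> x * (\<phi> s * indicator {u x..} s) \<partial>lborel) \<partial>lborel)"
    by (intro nn_integral_cong) (simp add: nn_integral_cmult)
  also have "\<dots> = (\<integral>\<^sup>+s. (\<integral>\<^sup>+x. \<rho> x * (\<phi> s * indicator {u x..} s) \<partial>lborel) \<partial>lborel)"
  proof (rule lborel_pair.Fubini'[symmetric])
    have [measurable]: "Measurable.pred (borel \<Otimes>\<^sub>M borel) (\<lambda>x::'a\<times>real. snd x \<in> {u (fst x)..})"
      by (simp only: atLeast_iff) measurable
    show "case_prod (\<lambda>x s. \<rho> x * (\<phi> s * indicator {u x..} s)) \<in> borel_measurable (lborel \<Otimes>\<^sub>M lborel)"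
      by measurable
  qed
  also have "\<dots> = (\<integral>\<^sup>+s. \<phi> s * (\<integral>\<^sup>+x. \<rho> x * indicator {x. u x \<le> s} x \<partial>lborel) \<partial>lborel)"
    by (intro nn_integral_cong) (simp add: nn_integral_cmult[symmetric] mult_ac, intro nn_integral_cong, simp split: split_indicator)
  finally show ?thesis .
qed

lemma Itail:
  assumes "t > 0" "b > 0"
  shows "(\<integral>\<^sup>+s. ennreal (s powr (-b-1)) * indicator {t..} s \<partial>lborel) = ennreal (t powr (-b) / b)"
proof -
  have "(\<integral>\<^sup>+s. ennreal (s powr (-b-1)) * indicator {t..} s \<partial>lborel) = ennreal (0 - (- (t powr (-b)) / b))"
  proof (rule nn_integral_FTC_atLeast)
    show "(\<lambda>s. s powr (-b-1)) \<in> borel_measurable borel" by measurable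
    fix x assume "t \<le> x"
    with assms have x: "x > 0" by auto
    show "((\<lambda>s. - (s powr (-b)) / b) has_real_derivative x powr (-b-1)) (at x)"
      using x assms
      by (auto intro!: derivative_eq_intros simp: powr_diff field_simps powr_minus)
    show "0 \<le> x powr (-b-1)" by simp
  next
    show "((\<lambda>s. - (s powr (-b)) / b) \<longlongrightarrow> 0) at_top"
      using assms by real_asymp
  qed
  then show ?thesis by simp
qed

lemma Jtail:
  assumes "m > 0" "t \<ge> m" "b > 0"
  shows "(\<integral>\<^sup>+s. ennreal (b * s powr (-b-1) * ln (s/m)) * indicator {t..} s \<partial>lborel)
       = ennreal (t powr (-b) * ln (t/m) + t powr (-b) / b)"
proof -
  have "(\<integral>\<^sup>+s. ennreal (b * s powr (-b-1) * ln (s/m)) * indicator {t..} s \<partial>lborel)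
      = ennreal (0 - (- (t powr (-b) * ln (t/m)) - t powr (-b) / b))"
  proof (rule nn_integral_FTC_atLeast)
    show "(\<lambda>s. b * s powr (-b-1) * ln (s/m)) \<in> borel_measurable borel" by measurable
    fix x assume "t \<le> x"
    with assms have x: "x > 0" "x \<ge> m" by auto
    show "((\<lambda>s. - (s powr (-b) * ln (s/m)) - s powr (-b) / b) has_real_derivative b * x powr (-b-1) * ln (x/m)) (at x)"
      using x assms
      by (auto intro!: derivative_eq_intros simp: powr_diff field_simps powr_minus)
    show "0 \<le> b * x powr (-b-1) * ln (x/m)" using x assms by simp
  next
    show "((\<lambda>s. - (s powr (-b) * ln (s/m)) - s powr (-b) / b) \<longlongrightarrow> 0) at_top"
      using assms by real_asymp
  qed
  then show ?thesis by (simp add: add.commute)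
qed

definition IA :: "real \<Rightarrow> nat \<Rightarrow> real \<Rightarrow> ennreal" where
  "IA m n b = (\<integral>\<^sup>+s. ennreal (s powr (-b-1) * (s-m)^n) * indicator {m..} s \<partial>lborel)"

definition JA :: "real \<Rightarrow> nat \<Rightarrow> real \<Rightarrow> ennreal" where
  "JA m n b = (\<integral>\<^sup>+s. ennreal (s powr (-b-1) * (s-m)^n * ln (s/m)) * indicator {m..} s \<partial>lborel)"

lemma pow_as_int:
  assumes "m \<le> s"
  shows "(\<integral>\<^sup>+t. ennreal (real (Suc n) * (t-m)^n) * indicator {m..s} t \<partial>lborel) = ennreal ((s-m)^Suc n)"
proof -
  have "(\<integral>\<^sup>+t. ennreal (real (Suc n) * (t-m)^n) * indicator {m..s} t \<partial>lborel) = ennreal ((s-m)^Suc n - (m-m)^Suc n)"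
  proof (rule nn_integral_FTC_Icc[where F="\<lambda>t. (t-m)^Suc n"])
    fix x :: real
    show "((\<lambda>t. (t-m)^Suc n) has_real_derivative real (Suc n) * (x-m)^n) (at x)"
      using DERIV_power_Suc[OF DERIV_diff[OF DERIV_ident DERIV_const[of m]]] by (simp add: algebra_simps)
  qed (use assms in auto)
  then show ?thesis by simp
qed

lemma IA_Suc:
  assumes "m > 0" "b > 0"
  shows "IA m (Suc n) b = ennreal (real (Suc n) / b) * IA m n (b-1)"
proof -
  define \<phi> where "\<phi> s = ennreal (s powr (-b-1)) * indicator {m..} s" for s :: real
  define \<rho> where "\<rho> t = ennreal (real (Suc n) * (t-m)^n) * indicator {m..} t" for t :: real
  have [measurable]: "\<phi> \<in> borel_measurable borel" "\<rho> \<in> borel_measurable borel"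
    unfolding \<phi>_def \<rho>_def by measurable
  have "IA m (Suc n) b = (\<integral>\<^sup>+s. \<phi> s * (\<integral>\<^sup>+t. \<rho> t * indicator {t. t \<le> s} t \<partial>lborel) \<partial>lborel)"
    unfolding IA_def
  proof (intro nn_integral_cong)
    fix s :: real
    show "ennreal (s powr (-b-1) * (s-m)^Suc n) * indicator {m..} s = \<phi> s * (\<integral>\<^sup>+t. \<rho> t * indicator {t. t \<le> s} t \<partial>lborel)"
    proof (cases "m \<le> s")
      case True
      have "(\<integral>\<^sup>+t. \<rho> t * indicator {t. t \<le> s} t \<partial>lborel) = (\<integral>\<^sup>+t. ennreal (real (Suc n) * (t-m)^n) * indicator {m..s} t \<partial>lborel)"
        unfolding \<rho>_def by (intro nn_integral_cong) (auto split: split_indicator)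
      also have "\<dots> = ennreal ((s-m)^Suc n)" using pow_as_int[OF True] .
      finally show ?thesis using True unfolding \<phi>_def by (simp add: ennreal_mult)
    qed (simp add: \<phi>_def)
  qed
  also have "\<dots> = (\<integral>\<^sup>+t. \<rho> t * (\<integral>\<^sup>+s. \<phi> s * indicator {t..} s \<partial>lborel) \<partial>lborel)"
    using tonelli_level[of "\<lambda>t. t" \<rho> \<phi>] by simp
  also have "\<dots> = (\<integral>\<^sup>+t. ennreal (real (Suc n) / b) * (ennreal (t powr (-(b-1)-1) * (t-m)^n) * indicator {m..} t) \<partial>lborel)"
  proof (intro nn_integral_cong)
    fix t :: real
    show "\<rho> t * (\<integral>\<^sup>+s. \<phi> s * indicator {t..} s \<partial>lborel) = ennreal (real (Suc n) / b) * (ennreal (t powr (-(b-1)-1) * (t-m)^n) * indicator {m..} t)"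
    proof (cases "m \<le> t")
      case True
      have "(\<integral>\<^sup>+s. \<phi> s * indicator {t..} s \<partial>lborel) = (\<integral>\<^sup>+s. ennreal (s powr (-b-1)) * indicator {t..} s \<partial>lborel)"
        unfolding \<phi>_def using True by (intro nn_integral_cong) (auto split: split_indicator)
      also have "\<dots> = ennreal (t powr (-b) / b)" using Itail[of t b] True assms by simp
      finally have 1: "(\<integral>\<^sup>+s. \<phi> s * indicator {t..} s \<partial>lborel) = ennreal (t powr (-b) / b)" .
      have e: "real (Suc n) * (t-m)^n * (t powr (-b) / b) = real (Suc n) / b * (t powr (-(b-1)-1) * (t-m)^n)"
        by simp
      have 2: "ennreal (real (Suc n) * (t-m)^n) * ennreal (t powr (-b)/b) = ennreal (real (Suc n) * (t-m)^n * (t powr (-b)/b))"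
        by (rule ennreal_mult[symmetric]) (use True assms in auto)
      have 3: "ennreal (real (Suc n)/b) * ennreal (t powr (-(b-1)-1) * (t-m)^n) = ennreal (real (Suc n) / b * (t powr (-(b-1)-1) * (t-m)^n))"
        by (rule ennreal_mult[symmetric]) (use True assms in auto)
      show ?thesis using True unfolding \<rho>_def 1
        by (simp only: indicator_simps atLeast_iff mult_1_right 2 3 e)
    qed (simp add: \<rho>_def)
  qed
  also have "\<dots> = ennreal (real (Suc n) / b) * IA m n (b-1)"
    unfolding IA_def by (rule nn_integral_cmult) measurable
  finally show ?thesis .
qed

lemma lnpow_as_int:
  assumes "0 < m" "m \<le> s"
  shows "(\<integral>\<^sup>+t. ennreal (real (Suc n) * (t-m)^n * ln (t/m) + (t-m)^Suc n / t) * indicator {m..s} t \<partial>lborel)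
       = ennreal ((s-m)^Suc n * ln (s/m))"
proof -
  have "(\<integral>\<^sup>+t. ennreal (real (Suc n) * (t-m)^n * ln (t/m) + (t-m)^Suc n / t) * indicator {m..s} t \<partial>lborel)
     = ennreal ((s-m)^Suc n * ln (s/m) - (m-m)^Suc n * ln (m/m))"
  proof (rule nn_integral_FTC_Icc[where F="\<lambda>t. (t-m)^Suc n * ln (t/m)"])
    fix x :: real assume x: "x \<in> {m..s}"
    have d1: "((\<lambda>t. (t-m)^Suc n) has_real_derivative real (Suc n) * (x-m)^n) (at x)"
      using DERIV_power_Suc[OF DERIV_diff[OF DERIV_ident DERIV_const[of m]]] by (simp add: algebra_simps)
    have d2: "((\<lambda>t. ln (t/m)) has_real_derivative 1 / x) (at x)"
      using x assms by (auto intro!: derivative_eq_intros simp: field_simps)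
    show "((\<lambda>t. (t-m)^Suc n * ln (t/m)) has_real_derivative real (Suc n) * (x-m)^n * ln (x/m) + (x-m)^Suc n / x) (at x)"
      by (rule DERIV_cong[OF DERIV_mult[OF d1 d2]]) (use x assms in \<open>simp add: field_simps\<close>)
    show "0 \<le> real (Suc n) * (x-m)^n * ln (x/m) + (x-m)^Suc n / x"
      using x assms by (intro add_nonneg_nonneg mult_nonneg_nonneg divide_nonneg_nonneg) auto
  qed (use assms in auto)
  then show ?thesis by simp
qed

lemma JA_Suc:
  assumes "m > 0" "b > 0"
  shows "JA m (Suc n) b = ennreal (real (Suc n) / b) * JA m n (b-1) + ennreal (1/b) * IA m (Suc n) b"
proof -
  define \<phi> where "\<phi> s = ennreal (s powr (-b-1)) * indicator {m..} s" for s :: real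
  define \<rho> where "\<rho> t = ennreal (real (Suc n) * (t-m)^n * ln (t/m) + (t-m)^Suc n / t) * indicator {m..} t" for t :: real
  have [measurable]: "\<phi> \<in> borel_measurable borel" "\<rho> \<in> borel_measurable borel"
    unfolding \<phi>_def \<rho>_def by measurable
  have "JA m (Suc n) b = (\<integral>\<^sup>+s. \<phi> s * (\<integral>\<^sup>+t. \<rho> t * indicator {t. t \<le> s} t \<partial>lborel) \<partial>lborel)"
    unfolding JA_def
  proof (intro nn_integral_cong)
    fix s :: real
    show "ennreal (s powr (-b-1) * (s-m)^Suc n * ln (s/m)) * indicator {m..} s = \<phi> s * (\<integral>\<^sup>+t. \<rho> t * indicator {t. t \<le> s} t \<partial>lborel)"
    proof (cases "m \<le> s")
      case True
      have "(\<integral>\<^sup>+t. \<rho> t * indicator {t. t \<le> s} t \<partial>lborel) = (\<integral>\<^sup>+t. ennreal (real (Suc n) * (t-m)^n * ln (t/m) + (t-m)^Suc n / t) * indicator {m..s} t \<partial>lborel)"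
        unfolding \<rho>_def by (intro nn_integral_cong) (auto split: split_indicator)
      also have "\<dots> = ennreal ((s-m)^Suc n * ln (s/m))" using lnpow_as_int[OF assms(1) True] .
      finally show ?thesis using True assms unfolding \<phi>_def by (simp add: ennreal_mult mult.assoc)
    qed (simp add: \<phi>_def)
  qed
  also have "\<dots> = (\<integral>\<^sup>+t. \<rho> t * (\<integral>\<^sup>+s. \<phi> s * indicator {t..} s \<partial>lborel) \<partial>lborel)"
    using tonelli_level[of "\<lambda>t. t" \<rho> \<phi>] by simp
  also have "\<dots> = (\<integral>\<^sup>+t. ennreal (real (Suc n) / b) * (ennreal (t powr (-(b-1)-1) * (t-m)^n * ln (t/m)) * indicator {m..} t)
                     + ennreal (1/b) * (ennreal (t powr (-b-1) * (t-m)^Suc n) * indicator {m..} t) \<partial>lborel)"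
  proof (intro nn_integral_cong)
    fix t :: real
    show "\<rho> t * (\<integral>\<^sup>+s. \<phi> s * indicator {t..} s \<partial>lborel) = ennreal (real (Suc n) / b) * (ennreal (t powr (-(b-1)-1) * (t-m)^n * ln (t/m)) * indicator {m..} t)
                     + ennreal (1/b) * (ennreal (t powr (-b-1) * (t-m)^Suc n) * indicator {m..} t)"
    proof (cases "m \<le> t")
      case True
      have "(\<integral>\<^sup>+s. \<phi> s * indicator {t..} s \<partial>lborel) = (\<integral>\<^sup>+s. ennreal (s powr (-b-1)) * indicator {t..} s \<partial>lborel)"
        unfolding \<phi>_def using True by (intro nn_integral_cong) (auto split: split_indicator)
      also have "\<dots> = ennreal (t powr (-b) / b)" using Itail[of t b] True assms by simp
      finally have 1: "(\<integral>\<^sup>+s. \<phi> s * indicator {t..} s \<partial>lborel) = ennreal (t powr (-b) / b)" .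
      have tp: "t > 0" using True assms by simp
      have pw: "t powr (-b-1) = t powr (-b) / t" using tp by (simp add: powr_diff)
      have e: "(real (Suc n) * (t-m)^n * ln (t/m) + (t-m)^Suc n / t) * (t powr (-b) / b)
             = real (Suc n) / b * (t powr (-(b-1)-1) * (t-m)^n * ln (t/m)) + 1/b * (t powr (-b-1) * (t-m)^Suc n)"
        using tp assms unfolding pw by (simp add: field_simps)
      have nn1: "0 \<le> real (Suc n) * (t-m)^n * ln (t/m) + (t-m)^Suc n / t"
        using True tp assms by (intro add_nonneg_nonneg mult_nonneg_nonneg divide_nonneg_nonneg) auto
      have 2: "ennreal (real (Suc n) * (t-m)^n * ln (t/m) + (t-m)^Suc n / t) * ennreal (t powr (-b)/b)
             = ennreal ((real (Suc n) * (t-m)^n * ln (t/m) + (t-m)^Suc n / t) * (t powr (-b)/b))"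
        by (rule ennreal_mult[symmetric]) (use nn1 assms in auto)
      have 3: "ennreal (real (Suc n) / b * (t powr (-(b-1)-1) * (t-m)^n * ln (t/m)) + 1/b * (t powr (-b-1) * (t-m)^Suc n))
           = ennreal (real (Suc n) / b) * ennreal (t powr (-(b-1)-1) * (t-m)^n * ln (t/m)) + ennreal (1/b) * ennreal (t powr (-b-1) * (t-m)^Suc n)"
      proof -
        have a1: "0 \<le> t powr (-(b-1)-1) * (t-m)^n * ln (t/m)" using True tp assms by simp
        have a2: "0 \<le> t powr (-b-1) * (t-m)^Suc n" using True tp assms by simp
        have c1: "0 \<le> real (Suc n) / b" using assms by simp
        have c2: "0 \<le> 1 / b" using assms by simp
        show ?thesis
          by (simp only: ennreal_plus[OF mult_nonneg_nonneg[OF c1 a1] mult_nonneg_nonneg[OF c2 a2]]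
              ennreal_mult[OF c1 a1] ennreal_mult[OF c2 a2])
      qed
      show ?thesis using True unfolding \<rho>_def 1
        by (simp only: indicator_simps atLeast_iff mult_1_right 2 e 3)
    qed (simp add: \<rho>_def)
  qed
  also have "\<dots> = ennreal (real (Suc n) / b) * JA m n (b-1) + ennreal (1/b) * IA m (Suc n) b"
    unfolding JA_def IA_def
    by (subst nn_integral_add) (auto simp: nn_integral_cmult)
  finally show ?thesis .
qed

lemma IA_0:
  assumes "m > 0" "b > 0"
  shows "IA m 0 b = ennreal (m powr (-b) / b)"
  using Itail[OF assms(1,2)] unfolding IA_def by simp

lemma JA_0:
  assumes "m > 0" "b > 0"
  shows "JA m 0 b = ennreal (m powr (-b) / b^2)"
proof -
  have "(\<integral>\<^sup>+s. ennreal (s powr (-b-1) * ln (s/m)) * indicator {m..} s \<partial>lborel) = ennreal (0 - (- (m powr (-b) * ln (m/m)) / b - m powr (-b) / b^2))"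
  proof (rule nn_integral_FTC_atLeast[where F="\<lambda>s. - (s powr (-b) * ln (s/m)) / b - s powr (-b) / b^2"])
    show "(\<lambda>s. s powr (-b-1) * ln (s/m)) \<in> borel_measurable borel" by measurable
    fix x assume "m \<le> x"
    with assms have x: "x > 0" "x \<ge> m" by auto
    show "((\<lambda>s. - (s powr (-b) * ln (s/m)) / b - s powr (-b) / b^2) has_real_derivative x powr (-b-1) * ln (x/m)) (at x)"
      using x assms
      by (auto intro!: derivative_eq_intros simp: powr_diff field_simps powr_minus power2_eq_square)
    show "0 \<le> x powr (-b-1) * ln (x/m)" using x assms by simp
  next
    show "((\<lambda>s. - (s powr (-b) * ln (s/m)) / b - s powr (-b) / b^2) \<longlongrightarrow> 0) at_top"
      using assms by real_asymp
  qed
  then show ?thesis unfolding JA_def by simp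
qed

lemma IA_closed:
  assumes "m > 0" "real n < b"
  shows "IA m n b = ennreal (fact n * m powr (real n - b) / (\<Prod>i\<le>n. (b - real i)))"
  using assms(2)
proof (induction n arbitrary: b)
  case 0
  then show ?case using IA_0[OF assms(1), of b] by (simp add: powr_minus)
next
  case (Suc n)
  have b: "b > 0" using Suc.prems by simp
  have ih: "IA m n (b-1) = ennreal (fact n * m powr (real n - (b-1)) / (\<Prod>i\<le>n. (b - 1 - real i)))"
    using Suc.IH[of "b-1"] Suc.prems by simp
  have pos: "(\<Prod>i\<le>n. (b - 1 - real i)) > 0"
    using Suc.prems by (intro prod_pos) auto
  have pr: "(\<Prod>i\<le>Suc n. (b - real i)) = b * (\<Prod>i\<le>n. (b - 1 - real i))"
    by (subst prod.atMost_Suc_shift) (simp add: algebra_simps)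
  have "IA m (Suc n) b = ennreal (real (Suc n) / b) * ennreal (fact n * m powr (real n - (b-1)) / (\<Prod>i\<le>n. (b - 1 - real i)))"
    using IA_Suc[OF assms(1) b, of n] ih by simp
  also have "\<dots> = ennreal (real (Suc n) / b * (fact n * m powr (real n - (b-1)) / (\<Prod>i\<le>n. (b - 1 - real i))))"
    using b pos by (intro ennreal_mult[symmetric]) auto
  also have "real (Suc n) / b * (fact n * m powr (real n - (b-1)) / (\<Prod>i\<le>n. (b - 1 - real i)))
           = fact (Suc n) * m powr (real (Suc n) - b) / (\<Prod>i\<le>Suc n. (b - real i))"
    unfolding pr using b pos by (simp add: field_simps algebra_simps)
  finally show ?case .
qed

lemma JA_closed:
  assumes "m > 0" "real n < b"
  shows "JA m n b = ennreal (\<Sum>i\<le>n. 1 / (b - real i)) * IA m n b"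
  using assms(2)
proof (induction n arbitrary: b)
  case 0
  then show ?case using IA_0[OF assms(1), of b] JA_0[OF assms(1), of b]
    by (simp add: ennreal_mult[symmetric] power2_eq_square)
next
  case (Suc n)
  have b: "b > 0" using Suc.prems by simp
  define c where "c = (\<Sum>i\<le>n. 1 / (b - 1 - real i))"
  have c0: "c \<ge> 0" unfolding c_def using Suc.prems by (intro sum_nonneg) auto
  have ih: "JA m n (b-1) = ennreal c * IA m n (b-1)"
    using Suc.IH[of "b-1"] Suc.prems by (simp add: c_def)
  have sm: "(\<Sum>i\<le>Suc n. 1 / (b - real i)) = 1/b + c"
    unfolding c_def by (subst sum.atMost_Suc_shift) (simp add: algebra_simps)
  have "JA m (Suc n) b = ennreal (real (Suc n) / b) * (ennreal c * IA m n (b-1)) + ennreal (1/b) * IA m (Suc n) b"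
    using JA_Suc[OF assms(1) b, of n] ih by simp
  also have "\<dots> = ennreal c * IA m (Suc n) b + ennreal (1/b) * IA m (Suc n) b"
    using IA_Suc[OF assms(1) b, of n] by (simp add: mult_ac)
  also have "\<dots> = ennreal (1/b + c) * IA m (Suc n) b"
    using c0 b by (simp add: ennreal_plus distrib_right add.commute)
  finally show ?case unfolding sm .
qed

lemma IA_open:
  "(\<integral>\<^sup>+s. ennreal (b * s powr (-b-1) * (s-m)^n) * indicator {m<..} s \<partial>lborel) = ennreal b * IA m n b"
  if "b > 0" for b m :: real
proof -
  have "(\<integral>\<^sup>+s. ennreal (b * s powr (-b-1) * (s-m)^n) * indicator {m<..} s \<partial>lborel)
      = (\<integral>\<^sup>+s. ennreal b * (ennreal (s powr (-b-1) * (s-m)^n) * indicator {m..} s) \<partial>lborel)"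
  proof (intro nn_integral_cong_AE eventually_mono[OF AE_lborel_singleton[of m]] impI)
    fix x :: real assume "x \<noteq> m"
    show "ennreal (b * x powr (-b-1) * (x-m)^n) * indicator {m<..} x = ennreal b * (ennreal (x powr (-b-1) * (x-m)^n) * indicator {m..} x)"
    proof (cases "m < x")
      case True
      have "0 \<le> x powr (-b-1) * (x-m)^n" using True by simp
      from ennreal_mult[OF _ this, of b] True that show ?thesis by (simp add: mult.assoc)
    qed (use \<open>x \<noteq> m\<close> in auto)
  qed
  also have "\<dots> = ennreal b * IA m n b" unfolding IA_def by (rule nn_integral_cmult) measurable
  finally show ?thesis .
qed

lemma JA_open:
  "(\<integral>\<^sup>+s. ennreal (b * s powr (-b-1) * (s-m)^n * ln (s/m)) * indicator {m<..} s \<partial>lborel) = ennreal b * JA m n b"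
  if "b > 0" "m > 0" for b m :: real
proof -
  have "(\<integral>\<^sup>+s. ennreal (b * s powr (-b-1) * (s-m)^n * ln (s/m)) * indicator {m<..} s \<partial>lborel)
      = (\<integral>\<^sup>+s. ennreal b * (ennreal (s powr (-b-1) * (s-m)^n * ln (s/m)) * indicator {m..} s) \<partial>lborel)"
  proof (intro nn_integral_cong_AE eventually_mono[OF AE_lborel_singleton[of m]] impI)
    fix x :: real assume "x \<noteq> m"
    show "ennreal (b * x powr (-b-1) * (x-m)^n * ln (x/m)) * indicator {m<..} x = ennreal b * (ennreal (x powr (-b-1) * (x-m)^n * ln (x/m)) * indicator {m..} x)"
    proof (cases "m < x")
      case True
      have "0 \<le> x powr (-b-1) * (x-m)^n * ln (x/m)" using True that by simp
      from ennreal_mult[OF _ this, of b] True that show ?thesis by (simp add: mult.assoc)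
    qed (use \<open>x \<noteq> m\<close> in auto)
  qed
  also have "\<dots> = ennreal b * JA m n b" unfolding JA_def by (rule nn_integral_cmult) measurable
  finally show ?thesis .
qed

lemma cheb_1d:
  fixes V :: "real \<Rightarrow> real" and m \<beta> :: real and n :: nat
  assumes m: "m > 0" and nb: "real n < \<beta>"
  assumes Vmono: "mono V" and V0: "\<And>s. V s \<ge> 0"
  assumes Vanti: "\<And>s1 s2. m < s1 \<Longrightarrow> s1 \<le> s2 \<Longrightarrow> V s2 * (s1-m)^n \<le> V s1 * (s2-m)^n"
  assumes norm: "(\<integral>\<^sup>+s. ennreal (\<beta> * s powr (-\<beta>-1) * V s) * indicator {m<..} s \<partial>lborel) = 1"
  shows "(\<integral>\<^sup>+s. ennreal (\<beta> * s powr (-\<beta>-1) * ln (s/m) * V s) * indicator {m<..} s \<partial>lborel)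
         \<le> ennreal (\<Sum>i\<le>n. 1 / (\<beta> - real i))"
proof -
  have b: "\<beta> > 0" using nb by (cases n) auto
  have [measurable]: "V \<in> borel_measurable borel" using Vmono by (rule borel_measurable_mono)
  define c where "c = (\<Sum>i\<le>n. 1 / (\<beta> - real i))"
  have c0': "c > 0" unfolding c_def using nb by (intro sum_pos) auto
  then have c0: "c \<ge> 0" by simp
  define s0 where "s0 = m * exp c"
  have s0: "s0 > m" unfolding s0_def using m c0' by simp
  define \<psi>0 where "\<psi>0 = V s0 / (s0 - m)^n"
  have psi0: "\<psi>0 \<ge> 0" unfolding \<psi>0_def using V0 s0 by simp
  define w where "w s = \<beta> * s powr (-\<beta>-1)" for s
  have ptw: "ennreal (w s * ln (s/m) * V s) * indicator {m<..} s
             + ennreal (\<psi>0 * c) * (ennreal (w s * (s-m)^n) * indicator {m<..} s)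
           \<le> ennreal c * (ennreal (w s * V s) * indicator {m<..} s)
             + ennreal \<psi>0 * (ennreal (w s * (s-m)^n * ln (s/m)) * indicator {m<..} s)" for s
  proof (cases "m < s")
    case True
    have ws: "w s \<ge> 0" unfolding w_def using b by simp
    have lg: "ln (s/m) \<ge> 0" using True m by simp
    have key: "(ln (s/m) - c) * (V s - \<psi>0 * (s-m)^n) \<le> 0"
    proof (cases "s \<ge> s0")
      case True
      have sp: "s > 0" using True s0 m by linarith
      have "ln (m * exp c) \<le> ln s" using True s0 m sp unfolding s0_def by (subst ln_le_cancel_iff) auto
      moreover have "m * exp c > 0" using m by simp
      ultimately have "ln (s/m) \<ge> c" using True s0 m sp unfolding s0_def by (simp add: ln_div ln_mult)
      moreover have "V s * (s0-m)^n \<le> V s0 * (s-m)^n" using Vanti[of s0 s] True s0 by simp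
      then have "V s \<le> \<psi>0 * (s-m)^n" unfolding \<psi>0_def using s0 by (simp add: field_simps)
      ultimately show ?thesis by (simp add: mult_nonneg_nonpos)
    next
      case False
      have "ln s \<le> ln (m * exp c)" using False \<open>m < s\<close> m unfolding s0_def by (subst ln_le_cancel_iff) auto
      then have "ln (s/m) \<le> c" using \<open>m < s\<close> m by (simp add: ln_div ln_mult)
      moreover have "V s0 * (s-m)^n \<le> V s * (s0-m)^n" using Vanti[of s s0] False \<open>m < s\<close> by simp
      then have "\<psi>0 * (s-m)^n \<le> V s" unfolding \<psi>0_def using s0 by (simp add: field_simps)
      ultimately show ?thesis by (simp add: mult_nonpos_nonneg)
    qed
    have real_ineq: "w s * ln (s/m) * V s + \<psi>0 * c * (w s * (s-m)^n)
                   \<le> c * (w s * V s) + \<psi>0 * (w s * (s-m)^n * ln (s/m))"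
    proof -
      have "w s * ((ln (s/m) - c) * (V s - \<psi>0 * (s-m)^n)) \<le> 0"
        using ws key by (simp add: mult_nonneg_nonpos)
      then show ?thesis by (simp add: algebra_simps)
    qed
    have n1: "0 \<le> w s * ln (s/m) * V s" using ws lg V0 by simp
    have n2: "0 \<le> \<psi>0 * c * (w s * (s-m)^n)" using psi0 c0 ws True by simp
    have n3: "0 \<le> c * (w s * V s)" using c0 ws V0 by simp
    have n4: "0 \<le> \<psi>0 * (w s * (s-m)^n * ln (s/m))" using psi0 ws True lg by simp
    have "ennreal (w s * ln (s/m) * V s) + ennreal (\<psi>0 * c * (w s * (s-m)^n))
          \<le> ennreal (c * (w s * V s)) + ennreal (\<psi>0 * (w s * (s-m)^n * ln (s/m)))"
      using real_ineq by (simp only: ennreal_plus[OF n1 n2, symmetric] ennreal_plus[OF n3 n4, symmetric] ennreal_leI)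
    then show ?thesis using True psi0 c0 ws V0 lg
      by (simp add: ennreal_mult[symmetric])
  qed simp
  have "(\<integral>\<^sup>+s. ennreal (w s * ln (s/m) * V s) * indicator {m<..} s \<partial>lborel)
        + ennreal (\<psi>0 * c) * (\<integral>\<^sup>+s. ennreal (w s * (s-m)^n) * indicator {m<..} s \<partial>lborel)
      = (\<integral>\<^sup>+s. ennreal (w s * ln (s/m) * V s) * indicator {m<..} s
             + ennreal (\<psi>0 * c) * (ennreal (w s * (s-m)^n) * indicator {m<..} s) \<partial>lborel)"
    unfolding w_def by (simp add: nn_integral_add nn_integral_cmult)
  also have "\<dots> \<le> (\<integral>\<^sup>+s. ennreal c * (ennreal (w s * V s) * indicator {m<..} s)
             + ennreal \<psi>0 * (ennreal (w s * (s-m)^n * ln (s/m)) * indicator {m<..} s) \<partial>lborel)"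
    by (rule nn_integral_mono) (rule ptw)
  also have "\<dots> = ennreal c * (\<integral>\<^sup>+s. ennreal (w s * V s) * indicator {m<..} s \<partial>lborel)
             + ennreal \<psi>0 * (\<integral>\<^sup>+s. ennreal (w s * (s-m)^n * ln (s/m)) * indicator {m<..} s \<partial>lborel)"
    unfolding w_def by (simp add: nn_integral_add nn_integral_cmult)
  also have "\<dots> = ennreal c + ennreal \<psi>0 * (ennreal \<beta> * JA m n \<beta>)"
    using norm JA_open[OF b m, of n] unfolding w_def by simp
  finally have ineq: "(\<integral>\<^sup>+s. ennreal (w s * ln (s/m) * V s) * indicator {m<..} s \<partial>lborel)
        + ennreal (\<psi>0 * c) * (ennreal \<beta> * IA m n \<beta>) \<le> ennreal c + ennreal \<psi>0 * (ennreal \<beta> * JA m n \<beta>)"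
    using IA_open[OF b, of m n] unfolding w_def by simp
  have eq: "ennreal \<psi>0 * (ennreal \<beta> * JA m n \<beta>) = ennreal (\<psi>0 * c) * (ennreal \<beta> * IA m n \<beta>)"
    using JA_closed[OF m nb] psi0 c0 unfolding c_def[symmetric] by (simp add: ennreal_mult mult_ac)
  have fin: "ennreal (\<psi>0 * c) * (ennreal \<beta> * IA m n \<beta>) \<noteq> \<infinity>"
    using IA_closed[OF m nb] by (simp add: ennreal_mult_eq_top_iff)
  from ineq[unfolded eq] fin show ?thesis
    unfolding w_def c_def[symmetric]
    by (metis (no_types, lifting) add.commute ennreal_add_left_cancel_le)
qed

lemma dilate_measure:
  fixes A B :: "'a::euclidean_space set" and c :: 'a and t :: real
  assumes [measurable]: "A \<in> sets lborel" "B \<in> sets lborel" and t: "t > 0"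
  assumes AB: "\<And>y. y \<in> A \<Longrightarrow> (1-t) *\<^sub>R c + t *\<^sub>R y \<in> B"
  shows "ennreal (t ^ DIM('a)) * emeasure lborel A \<le> emeasure lborel B"
proof -
  have B': "B \<in> sets borel" using assms by simp
  define T where "T y = (1-t) *\<^sub>R c + t *\<^sub>R y" for y
  have [measurable]: "T \<in> borel_measurable borel" unfolding T_def by measurable
  have eq: "lborel = density (distr lborel borel T) (\<lambda>_. ennreal (\<bar>t\<bar> ^ DIM('a)))"
    unfolding T_def using lborel_affine[of t "(1-t) *\<^sub>R c"] t by simp
  have "emeasure lborel B = emeasure (density (distr lborel borel T) (\<lambda>_. ennreal (\<bar>t\<bar> ^ DIM('a)))) B"
    using eq by (rule arg_cong[where f="\<lambda>M. emeasure M B"])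
  also have "\<dots> = (\<integral>\<^sup>+x. ennreal (\<bar>t\<bar> ^ DIM('a)) * indicator B x \<partial>distr lborel borel T)"
    by (subst emeasure_density) (auto simp: B')
  also have "\<dots> = ennreal (\<bar>t\<bar> ^ DIM('a)) * emeasure (distr lborel borel T) B"
    by (subst nn_integral_cmult_indicator) (auto simp: B')
  also have "emeasure (distr lborel borel T) B = emeasure lborel (T -` B)"
    by (subst emeasure_distr) (auto simp: B')
  finally have 1: "emeasure lborel B = ennreal (t ^ DIM('a)) * emeasure lborel (T -` B)" using t by simp
  have "emeasure lborel A \<le> emeasure lborel (T -` B)"
  proof (rule emeasure_mono)
    have "T -` B \<inter> space borel \<in> sets borel"
      by (rule measurable_sets[where A=borel]) (use B' in auto)
    then show "T -` B \<in> sets lborel" by simp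
  qed (use AB in \<open>auto simp: T_def\<close>)
  then show ?thesis unfolding 1 by (rule mult_left_mono) simp
qed

locale nic =
  fixes \<beta> :: real and f :: "'a::euclidean_space \<Rightarrow> real"
  assumes dens: "is_density f" and conc: "neg_inv_concave \<beta> f" and bdim: "real DIM('a) < \<beta>"
begin

definition u where "u x = f x powr (-1/\<beta>)"
definition S where "S = {x. 0 < f x}"
definition L where "L s = {x. 0 < f x \<and> u x \<le> s}"
definition V where "V s = emeasure lborel (L s)"

lemma bpos: "\<beta> > 0" using bdim by (metis of_nat_0_le_iff order.strict_trans1)

lemma f_meas[measurable]: "f \<in> borel_measurable borel"
  using dens unfolding is_density_def by simp
lemma f_nonneg: "f x \<ge> 0" using dens unfolding is_density_def by simp
lemma f_int: "(\<integral>\<^sup>+ x. ennreal (f x) \<partial>lborel) = 1" using dens unfolding is_density_def by simp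

lemma u_meas[measurable]: "u \<in> borel_measurable borel" unfolding u_def by measurable
lemma S_meas[measurable]: "S \<in> sets borel" unfolding S_def by measurable
lemma L_meas[measurable]: "L s \<in> sets borel" unfolding L_def by measurable

lemma u_pos: "0 < f x \<Longrightarrow> 0 < u x" unfolding u_def by simp
lemma f_u: "0 < f x \<Longrightarrow> f x = u x powr (-\<beta>)"
  unfolding u_def using bpos by (simp add: powr_powr)

lemma convex_step:
  assumes x: "0 < f x" and y: "0 < f y" and l: "0 \<le> l" "l \<le> 1"
  shows "0 < f ((1-l) *\<^sub>R x + l *\<^sub>R y) \<and> u ((1-l) *\<^sub>R x + l *\<^sub>R y) \<le> (1-l) * u x + l * u y"
proof -
  define Q where "Q = (1-l) * u x + l * u y"
  have Qpos: "Q > 0" unfolding Q_def using u_pos[OF x] u_pos[OF y] l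
    by (cases "l = 0") (auto intro: add_pos_nonneg add_nonneg_pos)
  have "f ((1-l) *\<^sub>R x + l *\<^sub>R y) \<ge> Q powr (-\<beta>)"
    using conc x y l unfolding neg_inv_concave_def Q_def u_def by auto
  moreover have "Q powr (-\<beta>) > 0" using Qpos by simp
  ultimately have fz: "0 < f ((1-l) *\<^sub>R x + l *\<^sub>R y)" by linarith
  have "u ((1-l) *\<^sub>R x + l *\<^sub>R y) \<le> (Q powr (-\<beta>)) powr (-1/\<beta>)"
    unfolding u_def using \<open>f _ \<ge> Q powr (-\<beta>)\<close> \<open>Q powr (-\<beta>) > 0\<close> bpos
    by (intro powr_mono2') auto
  also have "\<dots> = Q" using bpos Qpos by (simp add: powr_powr)
  finally show ?thesis using fz unfolding Q_def by simp
qed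

lemma V_bound:
  assumes "s > 0"
  shows "V s \<le> ennreal (s powr \<beta>)"
proof -
  have "ennreal (s powr (-\<beta>)) * V s = (\<integral>\<^sup>+x. ennreal (s powr (-\<beta>)) * indicator (L s) x \<partial>lborel)"
    unfolding V_def by (simp add: nn_integral_cmult_indicator)
  also have "\<dots> \<le> (\<integral>\<^sup>+ x. ennreal (f x) \<partial>lborel)"
  proof (intro nn_integral_mono)
    fix x show "ennreal (s powr (-\<beta>)) * indicator (L s) x \<le> ennreal (f x)"
    proof (cases "x \<in> L s")
      case True
      then have fx: "0 < f x" "u x \<le> s" unfolding L_def by auto
      have "s powr (-\<beta>) \<le> u x powr (-\<beta>)" using fx u_pos[OF fx(1)] bpos by (intro powr_mono2') auto
      then show ?thesis using True f_u[OF fx(1)] by (simp add: ennreal_leI)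
    qed simp
  qed
  also have "\<dots> = 1" by (rule f_int)
  finally have "ennreal (s powr (-\<beta>)) * V s \<le> 1" .
  then have "ennreal (s powr \<beta>) * (ennreal (s powr (-\<beta>)) * V s) \<le> ennreal (s powr \<beta>)"
    by (metis mult.right_neutral mult_left_mono zero_le)
  also have "ennreal (s powr \<beta>) * (ennreal (s powr (-\<beta>)) * V s) = V s"
    using assms by (simp add: mult.assoc[symmetric] ennreal_mult[symmetric] powr_add[symmetric])
  finally show ?thesis .
qed

lemma V_fin: "V s < \<infinity>"
proof (cases "s > 0")
  case True
  then show ?thesis using V_bound[OF True] by (simp add: le_less_trans)
next
  case False
  then have "L s = {}" unfolding L_def using u_pos by force
  then show ?thesis unfolding V_def by simp
qed

lemma V_nonpos: "s \<le> 0 \<Longrightarrow> V s = 0"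
proof -
  assume "s \<le> 0"
  then have "L s = {}" unfolding L_def using u_pos by force
  then show ?thesis unfolding V_def by simp
qed

lemma V_mono: "s1 \<le> s2 \<Longrightarrow> V s1 \<le> V s2"
  unfolding V_def by (rule emeasure_mono) (auto simp: L_def)

lemma V_dilate:
  assumes x0: "0 < f x0" and t: "0 < t" "t \<le> 1"
  shows "ennreal (t ^ DIM('a)) * V r \<le> V ((1-t) * u x0 + t * r)"
  unfolding V_def
proof (rule dilate_measure[where c=x0])
  fix y assume "y \<in> L r"
  then have y: "0 < f y" "u y \<le> r" unfolding L_def by auto
  from convex_step[OF x0 y(1), of t] t
  have "0 < f ((1-t) *\<^sub>R x0 + t *\<^sub>R y)" "u ((1-t) *\<^sub>R x0 + t *\<^sub>R y) \<le> (1-t) * u x0 + t * u y" by auto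
  moreover have "(1-t) * u x0 + t * u y \<le> (1-t) * u x0 + t * r" using y t by simp
  ultimately show "(1-t) *\<^sub>R x0 + t *\<^sub>R y \<in> L ((1-t) * u x0 + t * r)" unfolding L_def by auto
qed (use t in auto)

end

context nic
begin

lemma exists_pos_level: "\<exists>s1>0. V s1 > 0"
proof (rule ccontr)
  assume "\<not> ?thesis"
  then have V0: "\<And>s. s > 0 \<Longrightarrow> V s = 0" by (metis not_gr_zero)
  have "S = (\<Union>k. L (real (Suc k)))"
  proof
    show "S \<subseteq> (\<Union>k. L (real (Suc k)))"
    proof
      fix x assume "x \<in> S"
      obtain k where "u x \<le> real k" using real_arch_simple by blast
      then have "u x \<le> real (Suc k)" by simp
      with \<open>x \<in> S\<close> show "x \<in> (\<Union>k. L (real (Suc k)))" unfolding S_def L_def by auto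
    qed
  qed (auto simp: S_def L_def)
  moreover have "L (real (Suc k)) \<in> null_sets lborel" for k
    using V0[of "real (Suc k)"] unfolding V_def by (simp add: null_sets_def)
  moreover have "(\<Union>k. L (real (Suc k))) \<in> null_sets lborel" by (rule null_sets_UN) fact
  ultimately have "S \<in> null_sets lborel" by simp
  then have "AE x in lborel. x \<notin> S" using AE_iff_null_sets[of S lborel] by simp
  then have "AE x in lborel. ennreal (f x) = 0"
    by (rule eventually_mono) (use f_nonneg in \<open>auto simp: S_def not_less intro: antisym\<close>)
  from nn_integral_cong_AE[OF this] have "(\<integral>\<^sup>+ x. ennreal (f x) \<partial>lborel) = 0" by simp
  then show False using f_int by simp
qed

lemma S_ne: "S \<noteq> {}"
proof -
  obtain s1 where "s1 > 0" "V s1 > 0" using exists_pos_level by blast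
  then have "L s1 \<noteq> {}" unfolding V_def by auto
  then show ?thesis unfolding L_def S_def by auto
qed

definition m where "m = Inf (u ` S)"

lemma bdd: "bdd_below (u ` S)"
  by (rule bdd_belowI[where m=0]) (auto simp: S_def intro: less_imp_le u_pos)

lemma u_ge_m: "0 < f x \<Longrightarrow> m \<le> u x"
  unfolding m_def by (rule cInf_lower[OF _ bdd]) (auto simp: S_def)

lemma m_nonneg: "m \<ge> 0"
  unfolding m_def using S_ne by (intro cInf_greatest) (auto simp: S_def intro: less_imp_le u_pos)

lemma near_m: "\<epsilon> > 0 \<Longrightarrow> \<exists>x. 0 < f x \<and> u x < m + \<epsilon>"
proof -
  assume "\<epsilon> > 0"
  then have "Inf (u ` S) < m + \<epsilon>" unfolding m_def by simp
  then obtain y where "y \<in> u ` S" "y < m + \<epsilon>" using cInf_less_iff[of "u ` S"] S_ne bdd by auto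
  then show ?thesis unfolding S_def by auto
qed

abbreviation "Vr s \<equiv> enn2real (V s)"

lemma V_eq: "V s = ennreal (Vr s)"
  using V_fin[of s] by (simp add: less_top)

lemma V_anti:
  assumes s1: "m < s1" and s12: "s1 \<le> s2"
  shows "Vr s2 * (s1-m)^DIM('a) \<le> Vr s1 * (s2-m)^DIM('a)"
proof (cases "s1 = s2")
  case True then show ?thesis by simp
next
  case False
  with s12 have s12': "s1 < s2" by simp
  define Q where "Q = (s1-m)/(s2-m)"
  have Q: "0 < Q" "Q < 1" unfolding Q_def using s1 s12' by (auto simp: field_simps)
  have step: "q ^ DIM('a) * Vr s2 \<le> Vr s1" if q: "0 < q" "q < Q" for q
  proof -
    define \<delta> where "\<delta> = (Q-q)*(s2-m)/(1-q)"
    have \<delta>: "\<delta> > 0" unfolding \<delta>_def using q Q s1 s12' by (auto intro!: divide_pos_pos mult_pos_pos)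
    obtain x0 where x0: "0 < f x0" "u x0 < m + \<delta>" using near_m[OF \<delta>] by blast
    have "(1-q) * u x0 < (1-q) * (m + \<delta>)" using x0 q Q by (intro mult_strict_left_mono) auto
    also have "(1-q) * (m + \<delta>) = (1-q)*m + (Q-q)*(s2-m)" unfolding \<delta>_def using q Q by (simp add: field_simps)
    finally have lt0: "(1-q) * u x0 < (1-q)*m + (Q-q)*(s2-m)" .
    have QQ: "Q*(s2-m) = s1-m" unfolding Q_def using s1 s12' by simp
    have e1: "(Q-q)*(s2-m) = (s1-m) - q*(s2-m)" using QQ by (simp add: left_diff_distrib)
    have e2: "(1-q)*m = m - q*m" "q*(s2-m) = q * s2 - q*m" by (simp_all add: algebra_simps)
    have lt: "(1-q) * u x0 + q * s2 \<le> s1" using lt0 e1 e2 by linarith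
    have "ennreal (q ^ DIM('a)) * V s2 \<le> V ((1-q) * u x0 + q * s2)"
      using V_dilate[OF x0(1), of q s2] q Q by simp
    also have "\<dots> \<le> V s1" using lt by (rule V_mono)
    finally have "ennreal (q ^ DIM('a)) * ennreal (Vr s2) \<le> ennreal (Vr s1)" using V_eq by metis
    then show ?thesis using q by (simp add: ennreal_mult[symmetric])
  qed
  have lim: "((\<lambda>q. q ^ DIM('a) * Vr s2) \<longlongrightarrow> Q ^ DIM('a) * Vr s2) (at_left Q)"
    by (intro tendsto_intros)
  have "Q ^ DIM('a) * Vr s2 \<le> Vr s1"
  proof (rule tendsto_upperbound[OF lim])
    show "\<forall>\<^sub>F q in at_left Q. q ^ DIM('a) * Vr s2 \<le> Vr s1"
      using eventually_at_left_real[OF Q(1)] by eventually_elim (auto intro: step)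
  qed simp
  then have "(s1-m)^DIM('a) / (s2-m)^DIM('a) * Vr s2 \<le> Vr s1" unfolding Q_def by (simp add: power_divide)
  then show ?thesis using s1 s12' by (simp add: field_simps)
qed

lemma m_pos: "m > 0"
proof (rule ccontr)
  assume "\<not> m > 0"
  then have m0: "m = 0" using m_nonneg by simp
  obtain s1 where s1: "s1 > 0" "V s1 > 0" using exists_pos_level by blast
  define K where "K = Vr s1 / s1 ^ DIM('a)"
  have "Vr s1 > 0" using s1(2) V_eq[of s1] by (metis ennreal_less_zero_iff)
  then have K: "K > 0" unfolding K_def using s1 by simp
  have bound: "K \<le> s powr (\<beta> - real DIM('a))" if s: "0 < s" "s < s1" for s
  proof -
    have "Vr s1 * s ^ DIM('a) \<le> Vr s * s1 ^ DIM('a)" using V_anti[of s s1] s m0 by simp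
    also have "Vr s \<le> s powr \<beta>" using V_bound[of s] s V_eq[of s] by (metis ennreal_le_iff powr_ge_zero)
    then have "Vr s * s1 ^ DIM('a) \<le> s powr \<beta> * s1 ^ DIM('a)" using s1 by (intro mult_right_mono) auto
    finally have "Vr s1 * s ^ DIM('a) \<le> s powr \<beta> * s1 ^ DIM('a)" .
    moreover have "s powr \<beta> = s powr (\<beta> - real DIM('a)) * s ^ DIM('a)"
      using s by (simp add: powr_diff powr_realpow)
    ultimately show ?thesis unfolding K_def using s s1 by (simp add: field_simps)
  qed
  have "((\<lambda>s. s powr (\<beta> - real DIM('a))) \<longlongrightarrow> 0) (at_right 0)"
    using bdim by real_asymp
  then have "\<forall>\<^sub>F s in at_right 0. s powr (\<beta> - real DIM('a)) < K" using K by (rule order_tendstoD)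
  moreover have "\<forall>\<^sub>F s in at_right 0. s \<in> {0<..<s1}" using eventually_at_right_real[OF s1(1)] .
  ultimately have "\<forall>\<^sub>F s in at_right (0::real). False"
    by eventually_elim (use bound in force)
  then show False by simp
qed

end

context nic
begin

lemma inner_V: "(\<integral>\<^sup>+x. indicator S x * indicator {x. u x \<le> s} x \<partial>lborel) = V s"
proof -
  have "(\<integral>\<^sup>+x. indicator S x * indicator {x. u x \<le> s} x \<partial>lborel) = (\<integral>\<^sup>+x. indicator (L s) x \<partial>lborel)"
    by (intro nn_integral_cong) (auto simp: S_def L_def split: split_indicator)
  also have "\<dots> = V s" unfolding V_def by simp
  finally show ?thesis .
qed

lemma layer1:
  "(\<integral>\<^sup>+s. ennreal (\<beta> * s powr (-\<beta>-1)) * indicator {m..} s * V s \<partial>lborel) = 1"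
proof -
  define \<phi> where "\<phi> s = ennreal (\<beta> * s powr (-\<beta>-1)) * indicator {m..} s" for s :: real
  have [measurable]: "\<phi> \<in> borel_measurable borel" unfolding \<phi>_def by measurable
  have [measurable]: "(indicator S :: 'a \<Rightarrow> ennreal) \<in> borel_measurable borel" by measurable
  have "(\<integral>\<^sup>+x. indicator S x * (\<integral>\<^sup>+s. \<phi> s * indicator {u x..} s \<partial>lborel) \<partial>lborel)
      = (\<integral>\<^sup>+s. \<phi> s * (\<integral>\<^sup>+x. indicator S x * indicator {x. u x \<le> s} x \<partial>lborel) \<partial>lborel)"
    by (rule tonelli_level) measurable
  also have "\<dots> = (\<integral>\<^sup>+s. ennreal (\<beta> * s powr (-\<beta>-1)) * indicator {m..} s * V s \<partial>lborel)"
    unfolding inner_V \<phi>_def ..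
  finally have 1: "(\<integral>\<^sup>+s. ennreal (\<beta> * s powr (-\<beta>-1)) * indicator {m..} s * V s \<partial>lborel)
     = (\<integral>\<^sup>+x. indicator S x * (\<integral>\<^sup>+s. \<phi> s * indicator {u x..} s \<partial>lborel) \<partial>lborel)" by simp
  also have "\<dots> = (\<integral>\<^sup>+x. ennreal (f x) \<partial>lborel)"
  proof (intro nn_integral_cong)
    fix x
    show "indicator S x * (\<integral>\<^sup>+s. \<phi> s * indicator {u x..} s \<partial>lborel) = ennreal (f x)"
    proof (cases "x \<in> S")
      case True
      then have fx: "0 < f x" unfolding S_def by simp
      have um: "m \<le> u x" "0 < u x" using u_ge_m[OF fx] u_pos[OF fx] by auto
      have "(\<integral>\<^sup>+s. \<phi> s * indicator {u x..} s \<partial>lborel) = (\<integral>\<^sup>+s. ennreal \<beta> * (ennreal (s powr (-\<beta>-1)) * indicator {u x..} s) \<partial>lborel)"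
        unfolding \<phi>_def using um bpos by (intro nn_integral_cong) (auto split: split_indicator simp: ennreal_mult)
      also have "\<dots> = ennreal \<beta> * ennreal (u x powr (-\<beta>) / \<beta>)"
        using Itail[OF um(2) bpos] by (simp add: nn_integral_cmult)
      also have "\<dots> = ennreal (f x)" using bpos f_u[OF fx] by (simp add: ennreal_mult[symmetric])
      finally show ?thesis using True by simp
    next
      case False
      then have "f x = 0" unfolding S_def using f_nonneg[of x] by simp
      then show ?thesis using False by simp
    qed
  qed
  also have "\<dots> = 1" by (rule f_int)
  finally show ?thesis .
qed

lemma layer2:
  "(\<integral>\<^sup>+s. ennreal (\<beta> * s powr (-\<beta>-1) * ln (s/m)) * indicator {m..} s * V s \<partial>lborel)
   = (\<integral>\<^sup>+x. indicator S x * ennreal (f x * ln (u x / m) + f x / \<beta>) \<partial>lborel)"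
proof -
  define \<phi> where "\<phi> s = ennreal (\<beta> * s powr (-\<beta>-1) * ln (s/m)) * indicator {m..} s" for s :: real
  have [measurable]: "\<phi> \<in> borel_measurable borel" unfolding \<phi>_def by measurable
  have [measurable]: "(indicator S :: 'a \<Rightarrow> ennreal) \<in> borel_measurable borel" by measurable
  have "(\<integral>\<^sup>+x. indicator S x * (\<integral>\<^sup>+s. \<phi> s * indicator {u x..} s \<partial>lborel) \<partial>lborel)
      = (\<integral>\<^sup>+s. \<phi> s * (\<integral>\<^sup>+x. indicator S x * indicator {x. u x \<le> s} x \<partial>lborel) \<partial>lborel)"
    by (rule tonelli_level) measurable
  also have "\<dots> = (\<integral>\<^sup>+s. ennreal (\<beta> * s powr (-\<beta>-1) * ln (s/m)) * indicator {m..} s * V s \<partial>lborel)"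
    unfolding inner_V \<phi>_def ..
  finally have 1: "(\<integral>\<^sup>+s. ennreal (\<beta> * s powr (-\<beta>-1) * ln (s/m)) * indicator {m..} s * V s \<partial>lborel)
     = (\<integral>\<^sup>+x. indicator S x * (\<integral>\<^sup>+s. \<phi> s * indicator {u x..} s \<partial>lborel) \<partial>lborel)" by simp
  also have "\<dots> = (\<integral>\<^sup>+x. indicator S x * ennreal (f x * ln (u x / m) + f x / \<beta>) \<partial>lborel)"
  proof (intro nn_integral_cong)
    fix x
    show "indicator S x * (\<integral>\<^sup>+s. \<phi> s * indicator {u x..} s \<partial>lborel) = indicator S x * ennreal (f x * ln (u x / m) + f x / \<beta>)"
    proof (cases "x \<in> S")
      case True
      then have fx: "0 < f x" unfolding S_def by simp
      have um: "m \<le> u x" "0 < u x" using u_ge_m[OF fx] u_pos[OF fx] by auto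
      have "(\<integral>\<^sup>+s. \<phi> s * indicator {u x..} s \<partial>lborel) = (\<integral>\<^sup>+s. ennreal (\<beta> * s powr (-\<beta>-1) * ln (s/m)) * indicator {u x..} s \<partial>lborel)"
        unfolding \<phi>_def using um by (intro nn_integral_cong) (auto split: split_indicator)
      also have "\<dots> = ennreal (u x powr (-\<beta>) * ln (u x / m) + u x powr (-\<beta>) / \<beta>)"
        using Jtail[OF m_pos um(1) bpos] .
      finally show ?thesis using True f_u[OF fx] by simp
    qed simp
  qed
  finally show ?thesis .
qed

lemma Vr_mono: "mono Vr"
proof (rule monoI)
  fix s1 s2 :: real assume "s1 \<le> s2"
  then show "Vr s1 \<le> Vr s2" using V_mono V_fin by (intro enn2real_mono) (auto simp: less_top)
qed

lemma V_below_m: "s < m \<Longrightarrow> V s = 0"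
proof -
  assume "s < m"
  then have "L s = {}" unfolding L_def using u_ge_m by force
  then show ?thesis unfolding V_def by simp
qed

lemma main_ineq:
  "(\<integral>\<^sup>+x. indicator S x * ennreal (f x * ln (u x / m) + f x / \<beta>) \<partial>lborel)
   \<le> ennreal (\<Sum>i\<le>DIM('a). 1 / (\<beta> - real i))"
proof -
  have n1: "(\<integral>\<^sup>+s. ennreal (\<beta> * s powr (-\<beta>-1) * Vr s) * indicator {m<..} s \<partial>lborel)
      = (\<integral>\<^sup>+s. ennreal (\<beta> * s powr (-\<beta>-1)) * indicator {m..} s * V s \<partial>lborel)"
  proof (intro nn_integral_cong_AE eventually_mono[OF AE_lborel_singleton[of m]] impI)
    fix s :: real assume "s \<noteq> m"
    show "ennreal (\<beta> * s powr (-\<beta>-1) * Vr s) * indicator {m<..} s = ennreal (\<beta> * s powr (-\<beta>-1)) * indicator {m..} s * V s"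
    proof (cases "m < s")
      case True
      then show ?thesis using bpos by (subst V_eq) (simp add: ennreal_mult)
    next
      case False
      then show ?thesis using \<open>s \<noteq> m\<close> by simp
    qed
  qed
  have n2: "(\<integral>\<^sup>+s. ennreal (\<beta> * s powr (-\<beta>-1) * ln (s/m) * Vr s) * indicator {m<..} s \<partial>lborel)
      = (\<integral>\<^sup>+s. ennreal (\<beta> * s powr (-\<beta>-1) * ln (s/m)) * indicator {m..} s * V s \<partial>lborel)"
  proof (intro nn_integral_cong_AE eventually_mono[OF AE_lborel_singleton[of m]] impI)
    fix s :: real assume "s \<noteq> m"
    show "ennreal (\<beta> * s powr (-\<beta>-1) * ln (s/m) * Vr s) * indicator {m<..} s = ennreal (\<beta> * s powr (-\<beta>-1) * ln (s/m)) * indicator {m..} s * V s"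
    proof (cases "m < s")
      case True
      have "0 \<le> \<beta> * s powr (-\<beta>-1) * ln (s/m)" using True m_pos bpos by simp
      then show ?thesis using True by (subst V_eq) (simp add: ennreal_mult)
    next
      case False
      then show ?thesis using \<open>s \<noteq> m\<close> by simp
    qed
  qed
  have "(\<integral>\<^sup>+s. ennreal (\<beta> * s powr (-\<beta>-1) * ln (s/m) * Vr s) * indicator {m<..} s \<partial>lborel)
         \<le> ennreal (\<Sum>i\<le>DIM('a). 1 / (\<beta> - real i))"
  proof (rule cheb_1d[OF m_pos bdim Vr_mono])
    show "\<And>s. 0 \<le> Vr s" by simp
    show "\<And>s1 s2. m < s1 \<Longrightarrow> s1 \<le> s2 \<Longrightarrow> Vr s2 * (s1 - m) ^ DIM('a) \<le> Vr s1 * (s2 - m) ^ DIM('a)"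
      by (rule V_anti)
    show "(\<integral>\<^sup>+s. ennreal (\<beta> * s powr (-\<beta>-1) * Vr s) * indicator {m<..} s \<partial>lborel) = 1"
      using n1 layer1 by simp
  qed
  then show ?thesis using n2 layer2 by simp
qed

end

context nic
begin

lemma f_le_M: "f x \<le> m powr (-\<beta>)"
proof (cases "0 < f x")
  case True
  have "u x powr (-\<beta>) \<le> m powr (-\<beta>)" using u_ge_m[OF True] m_pos bpos by (intro powr_mono2') auto
  then show ?thesis using f_u[OF True] by simp
next
  case False
  then show ?thesis using f_nonneg[of x] by simp
qed

lemma esssup_f: "ess_sup_norm f = ereal (m powr (-\<beta>))"
proof (rule antisym)
  have meas: "(\<lambda>x. ereal \<bar>f x\<bar>) \<in> borel_measurable lborel" by measurable
  show "ess_sup_norm f \<le> ereal (m powr (-\<beta>))"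
    unfolding ess_sup_norm_def using f_le_M f_nonneg
    by (intro esssup_I[OF meas] AE_I2) simp
  show "ereal (m powr (-\<beta>)) \<le> ess_sup_norm f"
  proof (rule ccontr)
    assume "\<not> ?thesis"
    then have lt: "ess_sup_norm f < ereal (m powr (-\<beta>))" by simp
    obtain y where y: "ess_sup_norm f < ereal y" "ereal y < ereal (m powr (-\<beta>))" using ereal_dense2[OF lt] by blast
    have lim: "((\<lambda>s. s powr (-\<beta>)) \<longlongrightarrow> m powr (-\<beta>)) (at_right m)"
      using m_pos by (intro tendsto_intros) auto
    have "\<forall>\<^sub>F s in at_right m. y < s powr (-\<beta>)" using lim y(2) by (intro order_tendstoD(1)) auto
    moreover have "\<forall>\<^sub>F s in at_right m. s \<in> {m<..<m+1}" by (rule eventually_at_right_real) simp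
    ultimately have ev: "\<forall>\<^sub>F s in at_right m. y < s powr (-\<beta>) \<and> m < s" by eventually_elim auto
    have "at_right m \<noteq> (bot :: real filter)" by simp
    from eventually_happens'[OF this ev] obtain s' where s': "y < s' powr (-\<beta>)" "m < s'" by blast
    obtain s1 where s1: "s1 > 0" "V s1 > 0" using exists_pos_level by blast
    have Vs1: "Vr s1 > 0" using s1(2) V_eq[of s1] by (metis ennreal_less_zero_iff)
    have "Vr s' > 0"
    proof (cases "s1 \<le> s'")
      case True
      then show ?thesis using Vs1 Vr_mono[THEN monoD, OF True] by simp
    next
      case False
      have "Vr s1 * (s'-m)^DIM('a) \<le> Vr s' * (s1-m)^DIM('a)" using V_anti[OF s'(2)] False by simp
      moreover have "Vr s1 * (s'-m)^DIM('a) > 0" using Vs1 s'(2) by simp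
      ultimately have "Vr s' * (s1-m)^DIM('a) > 0" by linarith
      show ?thesis
      proof (rule ccontr)
        assume "\<not> Vr s' > 0"
        then have "Vr s' = 0" using enn2real_nonneg[of "V s'"] by linarith
        then show False using \<open>Vr s' * (s1-m)^DIM('a) > 0\<close> by simp
      qed
    qed
    then have Vpos: "V s' \<noteq> 0" by (intro notI) simp
    have sub: "L s' \<subseteq> {x. ereal y < ereal \<bar>f x\<bar>}"
    proof
      fix x assume "x \<in> L s'"
      then have fx: "0 < f x" "u x \<le> s'" unfolding L_def by auto
      have "s' powr (-\<beta>) \<le> u x powr (-\<beta>)" using fx u_pos[OF fx(1)] bpos by (intro powr_mono2') auto
      then show "x \<in> {x. ereal y < ereal \<bar>f x\<bar>}" using s'(1) f_u[OF fx(1)] fx(1) by simp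
    qed
    have "AE x in lborel. ereal \<bar>f x\<bar> \<le> ess_sup_norm f" unfolding ess_sup_norm_def by (rule esssup_AE)
    then have "AE x in lborel. x \<notin> L s'"
    proof (rule eventually_mono)
      fix x assume a: "ereal \<bar>f x\<bar> \<le> ess_sup_norm f"
      show "x \<notin> L s'"
      proof
        assume "x \<in> L s'"
        then have "ereal y < ereal \<bar>f x\<bar>" using sub by blast
        moreover have "ereal \<bar>f x\<bar> < ereal y" using a y(1) by (rule order.strict_trans1)
        ultimately show False by simp
      qed
    qed
    then have "L s' \<in> null_sets lborel" by (subst AE_iff_null_sets) auto
    then have "V s' = 0" unfolding V_def by (simp add: null_sets_def)
    then show False using Vpos by simp
  qed
qed

lemma entropy_bound:
  "diff_entropy f \<le> - ln (real_of_ereal (ess_sup_norm f)) + \<beta> * (\<Sum>i=1..DIM('a). 1 / (\<beta> - real i))"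
proof -
  define c where "c = (\<Sum>i\<le>DIM('a). 1 / (\<beta> - real i))"
  define g where "g x = indicator S x * (f x * ln (u x / m))" for x
  have [measurable]: "g \<in> borel_measurable borel" unfolding g_def by measurable
  have g0: "g x \<ge> 0" for x
  proof (cases "0 < f x")
    case True
    then show ?thesis unfolding g_def S_def using u_ge_m[OF True] m_pos by simp
  qed (simp add: g_def S_def)
  have split: "indicator S x * ennreal (f x * ln (u x / m) + f x / \<beta>) = ennreal (g x) + ennreal (1/\<beta>) * ennreal (f x)" for x
  proof (cases "0 < f x")
    case True
    have "0 \<le> f x * ln (u x / m)" using True u_ge_m[OF True] m_pos by simp
    note nn = this
    show ?thesis
    proof -
      have a: "0 \<le> f x / \<beta>" using True bpos by simp
      have "ennreal (f x * ln (u x / m) + f x / \<beta>) = ennreal (f x * ln (u x / m)) + ennreal (f x / \<beta>)"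
        by (rule ennreal_plus[OF nn a])
      moreover have "ennreal (f x / \<beta>) = ennreal (1/\<beta>) * ennreal (f x)"
        using True bpos by (simp add: ennreal_mult[symmetric])
      ultimately show ?thesis unfolding g_def S_def using True by simp
    qed
  next
    case False
    then have "f x = 0" using f_nonneg[of x] by simp
    then show ?thesis unfolding g_def S_def by simp
  qed
  have "(\<integral>\<^sup>+x. ennreal (g x) \<partial>lborel) + ennreal (1/\<beta>) = (\<integral>\<^sup>+x. indicator S x * ennreal (f x * ln (u x / m) + f x / \<beta>) \<partial>lborel)"
  proof -
    have "(\<integral>\<^sup>+x. indicator S x * ennreal (f x * ln (u x / m) + f x / \<beta>) \<partial>lborel)
        = (\<integral>\<^sup>+x. ennreal (g x) + ennreal (1/\<beta>) * ennreal (f x) \<partial>lborel)"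
      by (simp only: split)
    also have "\<dots> = (\<integral>\<^sup>+x. ennreal (g x) \<partial>lborel) + (\<integral>\<^sup>+x. ennreal (1/\<beta>) * ennreal (f x) \<partial>lborel)"
      by (rule nn_integral_add) auto
    also have "(\<integral>\<^sup>+x. ennreal (1/\<beta>) * ennreal (f x) \<partial>lborel) = ennreal (1/\<beta>) * (\<integral>\<^sup>+x. ennreal (f x) \<partial>lborel)"
      by (rule nn_integral_cmult) auto
    finally show ?thesis using f_int by simp
  qed
  also have "\<dots> \<le> ennreal c" unfolding c_def by (rule main_ineq)
  finally have le: "(\<integral>\<^sup>+x. ennreal (g x) \<partial>lborel) + ennreal (1/\<beta>) \<le> ennreal c" .
  have "(\<integral>\<^sup>+x. ennreal (g x) \<partial>lborel) \<le> (\<integral>\<^sup>+x. ennreal (g x) \<partial>lborel) + ennreal (1/\<beta>)"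
    by (rule add_increasing2) simp_all
  also note le
  finally have "(\<integral>\<^sup>+x. ennreal (g x) \<partial>lborel) < top" using ennreal_less_top[of c] by (rule le_less_trans)
  then obtain G where G: "(\<integral>\<^sup>+x. ennreal (g x) \<partial>lborel) = ennreal G" "G \<ge> 0"
    unfolding less_top_ennreal by blast
  have gint: "integrable lborel g" "integral\<^sup>L lborel g = G"
    using nn_integral_eq_integrable[of g lborel G] G g0 by auto
  have "ennreal (G + 1/\<beta>) \<le> ennreal c" using le G bpos by (simp add: ennreal_plus)
  then have Gc: "G + 1/\<beta> \<le> c" using bpos
  proof -
    have "\<forall>i\<in>{..DIM('a)}. 0 \<le> 1 / (\<beta> - real i)"
    proof
      fix i assume "i \<in> {..DIM('a)}"
      then have "real i \<le> real DIM('a)" by simp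
      then show "0 \<le> 1 / (\<beta> - real i)" using bdim by simp
    qed
    then have "c \<ge> 0" unfolding c_def by (intro sum_nonneg) blast
    then show ?thesis using \<open>ennreal (G + 1/\<beta>) \<le> ennreal c\<close> by (simp add: ennreal_le_iff)
  qed
  have fint: "integrable lborel f" "integral\<^sup>L lborel f = 1"
    using nn_integral_eq_integrable[of f lborel 1] f_int f_nonneg by auto
  have fl: "f x * ln (f x) = - \<beta> * g x - \<beta> * ln m * f x" for x
  proof (cases "0 < f x")
    case True
    have lnf: "ln (f x) = - \<beta> * ln (u x)" using f_u[OF True] u_pos[OF True] by simp
    have lu: "ln (u x / m) = ln (u x) - ln m" using u_pos[OF True] m_pos by (simp add: ln_div)
    have "f x * ln (f x) = - \<beta> * (f x * ln (u x / m)) - \<beta> * ln m * f x"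
      unfolding lnf lu by (simp add: algebra_simps)
    then show ?thesis unfolding g_def S_def using True by simp
  next
    case False
    then have "f x = 0" using f_nonneg[of x] by simp
    then show ?thesis unfolding g_def S_def by simp
  qed
  have "diff_entropy f = - (\<integral>x. - \<beta> * g x - \<beta> * ln m * f x \<partial>lborel)"
    unfolding diff_entropy_def fl ..
  also have "\<dots> = \<beta> * G + \<beta> * ln m"
  proof -
    have "(\<integral>x. - \<beta> * g x - \<beta> * ln m * f x \<partial>lborel) = (\<integral>x. - \<beta> * g x \<partial>lborel) - (\<integral>x. \<beta> * ln m * f x \<partial>lborel)"
      using Bochner_Integration.integral_diff[OF integrable_mult_right[OF gint(1), of "- \<beta>"] integrable_mult_right[OF fint(1), of "\<beta> * ln m"]] by simp
    also have "\<dots> = - \<beta> * G - \<beta> * ln m" using gint fint by simp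
    finally show ?thesis by simp
  qed
  also have "\<dots> \<le> \<beta> * (c - 1/\<beta>) + \<beta> * ln m" using Gc bpos by simp
  also have "c - 1/\<beta> = (\<Sum>i=1..DIM('a). 1 / (\<beta> - real i))"
    unfolding c_def atMost_atLeast0 by (subst sum.atLeast_Suc_atMost) auto
  also have "\<beta> * ln m = - ln (real_of_ereal (ess_sup_norm f))"
    unfolding esssup_f using m_pos by simp
  finally show ?thesis by simp
qed


end

context nic
begin

lemma exact_val:
  assumes K: "K \<ge> 0" and HV: "\<And>s. m \<le> s \<Longrightarrow> V s = ennreal (K * (s-m)^DIM('a))"
  shows "(\<integral>\<^sup>+x. indicator S x * ennreal (f x * ln (u x / m) + f x / \<beta>) \<partial>lborel)
         = ennreal (\<Sum>i\<le>DIM('a). 1 / (\<beta> - real i))"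
proof -
  have e1: "(\<integral>\<^sup>+s. ennreal (\<beta> * s powr (-\<beta>-1)) * indicator {m..} s * V s \<partial>lborel)
      = ennreal K * (ennreal \<beta> * IA m DIM('a) \<beta>)"
  proof -
    have "(\<integral>\<^sup>+s. ennreal (\<beta> * s powr (-\<beta>-1)) * indicator {m..} s * V s \<partial>lborel)
        = (\<integral>\<^sup>+s. ennreal K * (ennreal \<beta> * (ennreal (s powr (-\<beta>-1) * (s-m)^DIM('a)) * indicator {m..} s)) \<partial>lborel)"
    proof (intro nn_integral_cong)
      fix s :: real
      show "ennreal (\<beta> * s powr (-\<beta>-1)) * indicator {m..} s * V s = ennreal K * (ennreal \<beta> * (ennreal (s powr (-\<beta>-1) * (s-m)^DIM('a)) * indicator {m..} s))"
      proof (cases "m \<le> s")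
        case True
        then show ?thesis using HV[OF True] K bpos by (simp add: ennreal_mult[symmetric] mult_ac)
      qed simp
    qed
    also have "\<dots> = ennreal K * (ennreal \<beta> * IA m DIM('a) \<beta>)"
      unfolding IA_def by (simp add: nn_integral_cmult)
    finally show ?thesis .
  qed
  have e2: "(\<integral>\<^sup>+s. ennreal (\<beta> * s powr (-\<beta>-1) * ln (s/m)) * indicator {m..} s * V s \<partial>lborel)
      = ennreal K * (ennreal \<beta> * JA m DIM('a) \<beta>)"
  proof -
    have "(\<integral>\<^sup>+s. ennreal (\<beta> * s powr (-\<beta>-1) * ln (s/m)) * indicator {m..} s * V s \<partial>lborel)
        = (\<integral>\<^sup>+s. ennreal K * (ennreal \<beta> * (ennreal (s powr (-\<beta>-1) * (s-m)^DIM('a) * ln (s/m)) * indicator {m..} s)) \<partial>lborel)"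
    proof (intro nn_integral_cong)
      fix s :: real
      show "ennreal (\<beta> * s powr (-\<beta>-1) * ln (s/m)) * indicator {m..} s * V s = ennreal K * (ennreal \<beta> * (ennreal (s powr (-\<beta>-1) * (s-m)^DIM('a) * ln (s/m)) * indicator {m..} s))"
      proof (cases "m \<le> s")
        case True
        have "0 \<le> ln (s/m)" using True m_pos by simp
        then show ?thesis using HV[OF True] K bpos True by (simp add: ennreal_mult[symmetric] mult_ac)
      qed simp
    qed
    also have "\<dots> = ennreal K * (ennreal \<beta> * JA m DIM('a) \<beta>)"
      unfolding JA_def by (simp add: nn_integral_cmult)
    finally show ?thesis .
  qed
  have one: "ennreal K * (ennreal \<beta> * IA m DIM('a) \<beta>) = 1" using layer1 e1 by simp
  have "(\<integral>\<^sup>+x. indicator S x * ennreal (f x * ln (u x / m) + f x / \<beta>) \<partial>lborel)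
       = ennreal K * (ennreal \<beta> * JA m DIM('a) \<beta>)" using layer2 e2 by simp
  also have "\<dots> = ennreal (\<Sum>i\<le>DIM('a). 1 / (\<beta> - real i)) * (ennreal K * (ennreal \<beta> * IA m DIM('a) \<beta>))"
    using JA_closed[OF m_pos bdim] by (simp add: mult_ac)
  also have "\<dots> = ennreal (\<Sum>i\<le>DIM('a). 1 / (\<beta> - real i))" unfolding one by simp
  finally show ?thesis .
qed

lemma entropy_eq:
  assumes K: "K \<ge> 0" and HV: "\<And>s. m \<le> s \<Longrightarrow> V s = ennreal (K * (s-m)^DIM('a))"
  shows "diff_entropy f = - ln (real_of_ereal (ess_sup_norm f)) + \<beta> * (\<Sum>i=1..DIM('a). 1 / (\<beta> - real i))"
proof -
  define c where "c = (\<Sum>i\<le>DIM('a). 1 / (\<beta> - real i))"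
  define g where "g x = indicator S x * (f x * ln (u x / m))" for x
  have [measurable]: "g \<in> borel_measurable borel" unfolding g_def by measurable
  have g0: "g x \<ge> 0" for x
  proof (cases "0 < f x")
    case True
    then show ?thesis unfolding g_def S_def using u_ge_m[OF True] m_pos by simp
  qed (simp add: g_def S_def)
  have split: "indicator S x * ennreal (f x * ln (u x / m) + f x / \<beta>) = ennreal (g x) + ennreal (1/\<beta>) * ennreal (f x)" for x
  proof (cases "0 < f x")
    case True
    have "0 \<le> f x * ln (u x / m)" using True u_ge_m[OF True] m_pos by simp
    note nn = this
    show ?thesis
    proof -
      have a: "0 \<le> f x / \<beta>" using True bpos by simp
      have "ennreal (f x * ln (u x / m) + f x / \<beta>) = ennreal (f x * ln (u x / m)) + ennreal (f x / \<beta>)"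
        by (rule ennreal_plus[OF nn a])
      moreover have "ennreal (f x / \<beta>) = ennreal (1/\<beta>) * ennreal (f x)"
        using True bpos by (simp add: ennreal_mult[symmetric])
      ultimately show ?thesis unfolding g_def S_def using True by simp
    qed
  next
    case False
    then have "f x = 0" using f_nonneg[of x] by simp
    then show ?thesis unfolding g_def S_def by simp
  qed
  have "(\<integral>\<^sup>+x. ennreal (g x) \<partial>lborel) + ennreal (1/\<beta>) = (\<integral>\<^sup>+x. indicator S x * ennreal (f x * ln (u x / m) + f x / \<beta>) \<partial>lborel)"
  proof -
    have "(\<integral>\<^sup>+x. indicator S x * ennreal (f x * ln (u x / m) + f x / \<beta>) \<partial>lborel)
        = (\<integral>\<^sup>+x. ennreal (g x) + ennreal (1/\<beta>) * ennreal (f x) \<partial>lborel)"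
      by (simp only: split)
    also have "\<dots> = (\<integral>\<^sup>+x. ennreal (g x) \<partial>lborel) + (\<integral>\<^sup>+x. ennreal (1/\<beta>) * ennreal (f x) \<partial>lborel)"
      by (rule nn_integral_add) auto
    also have "(\<integral>\<^sup>+x. ennreal (1/\<beta>) * ennreal (f x) \<partial>lborel) = ennreal (1/\<beta>) * (\<integral>\<^sup>+x. ennreal (f x) \<partial>lborel)"
      by (rule nn_integral_cmult) auto
    finally show ?thesis using f_int by simp
  qed
  also have "\<dots> = ennreal c" unfolding c_def by (rule exact_val[OF K HV])
  finally have eqc: "(\<integral>\<^sup>+x. ennreal (g x) \<partial>lborel) + ennreal (1/\<beta>) = ennreal c" .
  then have le: "(\<integral>\<^sup>+x. ennreal (g x) \<partial>lborel) + ennreal (1/\<beta>) \<le> ennreal c" by simp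
  have "(\<integral>\<^sup>+x. ennreal (g x) \<partial>lborel) \<le> (\<integral>\<^sup>+x. ennreal (g x) \<partial>lborel) + ennreal (1/\<beta>)"
    by (rule add_increasing2) simp_all
  also note le
  finally have "(\<integral>\<^sup>+x. ennreal (g x) \<partial>lborel) < top" using ennreal_less_top[of c] by (rule le_less_trans)
  then obtain G where G: "(\<integral>\<^sup>+x. ennreal (g x) \<partial>lborel) = ennreal G" "G \<ge> 0"
    unfolding less_top_ennreal by blast
  have gint: "integrable lborel g" "integral\<^sup>L lborel g = G"
    using nn_integral_eq_integrable[of g lborel G] G g0 by auto
  have "ennreal (G + 1/\<beta>) = ennreal c" using eqc G bpos by (simp add: ennreal_plus)
  then have Gc: "G + 1/\<beta> = c" using bpos
  proof -
    have "\<forall>i\<in>{..DIM('a)}. 0 \<le> 1 / (\<beta> - real i)"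
    proof
      fix i assume "i \<in> {..DIM('a)}"
      then have "real i \<le> real DIM('a)" by simp
      then show "0 \<le> 1 / (\<beta> - real i)" using bdim by simp
    qed
    then have "c \<ge> 0" unfolding c_def by (intro sum_nonneg) blast
    moreover have "0 \<le> G + 1/\<beta>" using G(2) bpos by simp
    ultimately show ?thesis using \<open>ennreal (G + 1/\<beta>) = ennreal c\<close> ennreal_inj by blast
  qed
  have fint: "integrable lborel f" "integral\<^sup>L lborel f = 1"
    using nn_integral_eq_integrable[of f lborel 1] f_int f_nonneg by auto
  have fl: "f x * ln (f x) = - \<beta> * g x - \<beta> * ln m * f x" for x
  proof (cases "0 < f x")
    case True
    have lnf: "ln (f x) = - \<beta> * ln (u x)" using f_u[OF True] u_pos[OF True] by simp
    have lu: "ln (u x / m) = ln (u x) - ln m" using u_pos[OF True] m_pos by (simp add: ln_div)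
    have "f x * ln (f x) = - \<beta> * (f x * ln (u x / m)) - \<beta> * ln m * f x"
      unfolding lnf lu by (simp add: algebra_simps)
    then show ?thesis unfolding g_def S_def using True by simp
  next
    case False
    then have "f x = 0" using f_nonneg[of x] by simp
    then show ?thesis unfolding g_def S_def by simp
  qed
  have "diff_entropy f = - (\<integral>x. - \<beta> * g x - \<beta> * ln m * f x \<partial>lborel)"
    unfolding diff_entropy_def fl ..
  also have "\<dots> = \<beta> * G + \<beta> * ln m"
  proof -
    have "(\<integral>x. - \<beta> * g x - \<beta> * ln m * f x \<partial>lborel) = (\<integral>x. - \<beta> * g x \<partial>lborel) - (\<integral>x. \<beta> * ln m * f x \<partial>lborel)"
      using Bochner_Integration.integral_diff[OF integrable_mult_right[OF gint(1), of "- \<beta>"] integrable_mult_right[OF fint(1), of "\<beta> * ln m"]] by simp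
    also have "\<dots> = - \<beta> * G - \<beta> * ln m" using gint fint by simp
    finally show ?thesis by simp
  qed
  also have "\<dots> = \<beta> * (c - 1/\<beta>) + \<beta> * ln m" using Gc bpos by simp
  also have "c - 1/\<beta> = (\<Sum>i=1..DIM('a). 1 / (\<beta> - real i))"
    unfolding c_def atMost_atLeast0 by (subst sum.atLeast_Suc_atMost) auto
  also have "\<beta> * ln m = - ln (real_of_ereal (ess_sup_norm f))"
    unfolding esssup_f using m_pos by simp
  finally show ?thesis by simp
qed


end

lemma scale_measure:
  fixes B :: "'a::euclidean_space set" and c :: real
  assumes B': "B \<in> sets borel" and c: "c > 0"
  shows "emeasure lborel B = ennreal (c ^ DIM('a)) * emeasure lborel ((\<lambda>x. c *\<^sub>R x) -` B)"
proof -
  define T where "T y = 0 + c *\<^sub>R y" for y :: 'a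
  have [measurable]: "T \<in> borel_measurable borel" unfolding T_def by measurable
  have eq: "lborel = density (distr lborel borel T) (\<lambda>_. ennreal (\<bar>c\<bar> ^ DIM('a)))"
    unfolding T_def using lborel_affine[of c 0] c by simp
  have "emeasure lborel B = emeasure (density (distr lborel borel T) (\<lambda>_. ennreal (\<bar>c\<bar> ^ DIM('a)))) B"
    using eq by (rule arg_cong[where f="\<lambda>M. emeasure M B"])
  also have "\<dots> = (\<integral>\<^sup>+x. ennreal (\<bar>c\<bar> ^ DIM('a)) * indicator B x \<partial>distr lborel borel T)"
    by (subst emeasure_density) (auto simp: B')
  also have "\<dots> = ennreal (\<bar>c\<bar> ^ DIM('a)) * emeasure (distr lborel borel T) B"
    by (subst nn_integral_cmult_indicator) (auto simp: B')
  also have "emeasure (distr lborel borel T) B = emeasure lborel (T -` B)"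
    by (subst emeasure_distr) (auto simp: B')
  finally show ?thesis using c unfolding T_def by simp
qed

definition Opos :: "(real^'n::finite) set" where "Opos = {x. \<forall>i. 0 < x $ i}"
definition wP :: "real \<Rightarrow> real^'n::finite \<Rightarrow> real" where "wP a x = a + (\<Sum>i\<in>UNIV. x $ i)"
definition LP :: "real \<Rightarrow> real \<Rightarrow> (real^'n::finite) set" where "LP a t = {x. x \<in> Opos \<and> wP a x \<le> t}"
definition T1 :: "(real^'n::finite) set" where "T1 = {x. x \<in> Opos \<and> (\<Sum>i\<in>UNIV. x $ i) \<le> 1}"

lemma Opos_open: "open (Opos :: (real^'n::finite) set)"
proof -
  have "Opos = (\<Inter>i\<in>UNIV. {x::real^'n. 0 < x $ i})" unfolding Opos_def by auto
  also have "open \<dots>" by (intro open_INT ballI open_Collect_less continuous_intros) simp_all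
  finally show ?thesis .
qed

lemma Opos_meas[measurable]: "(Opos :: (real^'n::finite) set) \<in> sets borel"
  using Opos_open by (rule borel_open)

lemma wP_meas[measurable]: "wP a \<in> borel_measurable borel"
  unfolding wP_def by measurable

lemma LP_meas[measurable]: "LP a t \<in> sets borel"
proof -
  have "LP a t = Opos \<inter> {x. wP a x \<le> t}" unfolding LP_def by auto
  also have "\<dots> \<in> sets borel" by measurable
  finally show ?thesis .
qed

lemma T1_meas[measurable]: "T1 \<in> sets borel"
proof -
  have "T1 = Opos \<inter> {x::real^'a. (\<Sum>i\<in>UNIV. x $ i) \<le> 1}" unfolding T1_def by auto
  also have "\<dots> \<in> sets borel" by measurable
  finally show ?thesis .
qed

lemma sum_pos_Opos: "x \<in> Opos \<Longrightarrow> 0 < (\<Sum>i\<in>UNIV. x $ i)"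
  unfolding Opos_def by (intro sum_pos) auto

lemma VP_formula:
  assumes "t \<ge> a"
  shows "emeasure lborel (LP a t :: (real^'n::finite) set) = ennreal ((t-a) ^ CARD('n)) * emeasure lborel (T1 :: (real^'n) set)"
proof (cases "t = a")
  case True
  have "(LP a t :: (real^'n) set) = {}" unfolding LP_def wP_def using True sum_pos_Opos by fastforce
  moreover have "CARD('n) \<noteq> 0" by simp
  ultimately show ?thesis using True by (simp add: power_0_left)
next
  case False
  with assms have c: "t - a > 0" by simp
  have pre: "(\<lambda>x. (t-a) *\<^sub>R x) -` LP a t = (T1 :: (real^'n) set)"
  proof -
    have "(\<Sum>i\<in>UNIV. (t-a) * x $ i) = (t-a) * (\<Sum>i\<in>UNIV. x $ i)" for x :: "real^'n"
      by (simp add: sum_distrib_left)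
    moreover have h: "a + (t-a) * S \<le> t \<longleftrightarrow> S \<le> 1" for S
    proof -
      have "a + (t-a) * S \<le> t \<longleftrightarrow> (t-a) * S \<le> (t-a) * 1" by (simp add: algebra_simps)
      also have "\<dots> \<longleftrightarrow> S \<le> 1" using c by (rule mult_le_cancel_left_pos)
      finally show ?thesis .
    qed
    ultimately show ?thesis using c
      by (auto simp: LP_def T1_def Opos_def wP_def zero_less_mult_iff mult_le_cancel_left_pos[of "t-a" _ 1, simplified])
  qed
  have "emeasure lborel (LP a t :: (real^'n) set) = ennreal ((t-a) ^ DIM(real^'n)) * emeasure lborel ((\<lambda>x. (t-a) *\<^sub>R x) -` (LP a t :: (real^'n) set))"
    by (rule scale_measure[OF _ c]) simp
  then show ?thesis unfolding pre by simp
qed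

lemma T1_fin: "emeasure lborel (T1 :: (real^'n::finite) set) < \<infinity>"
proof (rule emeasure_bounded_finite)
  show "bounded (T1 :: (real^'n) set)"
    unfolding bounded_iff
  proof (intro exI ballI)
    fix x :: "real^'n" assume x: "x \<in> T1"
    have "norm x \<le> (\<Sum>i\<in>UNIV. \<bar>x $ i\<bar>)" by (rule norm_le_l1_cart)
    also have "\<dots> = (\<Sum>i\<in>UNIV. x $ i)" using x unfolding T1_def Opos_def by (intro sum.cong) (auto simp: abs_of_pos)
    also have "\<dots> \<le> 1" using x unfolding T1_def by simp
    finally show "norm x \<le> 1" .
  qed
qed

lemma T1_pos: "emeasure lborel (T1 :: (real^'n::finite) set) > 0"
proof -
  define r :: real where "r = 1 / (2 * real CARD('n))"
  have r: "r > 0" unfolding r_def by simp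
  define c :: "real^'n" where "c = (\<chi> i. r)"
  have sub: "ball c r \<subseteq> T1"
  proof
    fix x assume "x \<in> ball c r"
    then have d: "norm (x - c) < r" by (simp add: dist_norm norm_minus_commute)
    have comp: "\<bar>x $ i - r\<bar> < r" for i
      using component_le_norm_cart[of "x - c" i] d unfolding c_def by simp
    have "x \<in> Opos" unfolding Opos_def using comp by (auto simp: abs_less_iff)
    moreover have "(\<Sum>i\<in>UNIV. x $ i) \<le> (\<Sum>i\<in>(UNIV::'n set). 2 * r)"
    proof (rule sum_mono)
      fix i show "x $ i \<le> 2 * r" using comp[of i] by (auto simp: abs_less_iff)
    qed
    moreover have "(\<Sum>i\<in>(UNIV::'n set). 2 * r) = 1" unfolding r_def by simp
    ultimately show "x \<in> T1" unfolding T1_def by simp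
  qed
  have "measure lborel (ball c r) > 0" using content_ball_pos[OF r] .
  then have "emeasure lborel (ball c r) \<noteq> 0" by (auto simp: measure_def)
  moreover have "emeasure lborel (ball c r) \<le> emeasure lborel (T1 :: (real^'n) set)" by (rule emeasure_mono[OF sub]) simp
  ultimately show ?thesis by (metis not_gr_zero le_zero_eq)
qed

lemma pareto_unnorm_eq:
  "pareto_unnorm a \<beta> x = indicator Opos x * wP a x powr (-\<beta>)"
  unfolding pareto_unnorm_def Opos_def wP_def by (simp split: split_indicator)

lemma pareto_unnorm_meas[measurable]: "pareto_unnorm a \<beta> \<in> borel_measurable borel"
  unfolding pareto_unnorm_eq[abs_def] by measurable

lemma wP_gt: "x \<in> Opos \<Longrightarrow> a < wP a x"
  unfolding wP_def using sum_pos_Opos by fastforce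

lemma nn_pareto:
  fixes a \<beta> :: real
  assumes a: "a > 0" and b: "\<beta> > 0"
  shows "(\<integral>\<^sup>+x. ennreal (pareto_unnorm a \<beta> (x :: real^'n::finite)) \<partial>lborel)
       = emeasure lborel (T1 :: (real^'n) set) * (ennreal \<beta> * IA a CARD('n) \<beta>)"
proof -
  define \<phi> where "\<phi> s = ennreal (\<beta> * s powr (-\<beta>-1)) * indicator {a..} s" for s :: real
  have [measurable]: "\<phi> \<in> borel_measurable borel" unfolding \<phi>_def by measurable
  have [measurable]: "(indicator Opos :: real^'n \<Rightarrow> ennreal) \<in> borel_measurable borel" by measurable
  have "(\<integral>\<^sup>+x. indicator (Opos :: (real^'n) set) x * (\<integral>\<^sup>+s. \<phi> s * indicator {wP a x..} s \<partial>lborel) \<partial>lborel)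
      = (\<integral>\<^sup>+s. \<phi> s * (\<integral>\<^sup>+x. indicator (Opos :: (real^'n) set) x * indicator {x. wP a x \<le> s} x \<partial>lborel) \<partial>lborel)"
    by (rule tonelli_level) measurable
  also have "\<dots> = (\<integral>\<^sup>+s. \<phi> s * emeasure lborel (LP a s :: (real^'n) set) \<partial>lborel)"
  proof (intro nn_integral_cong arg_cong2[where f="(*)"] refl)
    fix s
    have "(\<integral>\<^sup>+x. indicator (Opos :: (real^'n) set) x * indicator {x. wP a x \<le> s} x \<partial>lborel) = (\<integral>\<^sup>+x. indicator (LP a s :: (real^'n) set) x \<partial>lborel)"
      by (intro nn_integral_cong) (auto simp: LP_def split: split_indicator)
    then show "(\<integral>\<^sup>+x. indicator (Opos :: (real^'n) set) x * indicator {x. wP a x \<le> s} x \<partial>lborel) = emeasure lborel (LP a s :: (real^'n) set)"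
      by simp
  qed
  also have "\<dots> = (\<integral>\<^sup>+s. emeasure lborel (T1 :: (real^'n) set) * (ennreal \<beta> * (ennreal (s powr (-\<beta>-1) * (s-a)^CARD('n)) * indicator {a..} s)) \<partial>lborel)"
  proof (intro nn_integral_cong)
    fix s :: real
    show "\<phi> s * emeasure lborel (LP a s :: (real^'n) set) = emeasure lborel (T1 :: (real^'n) set) * (ennreal \<beta> * (ennreal (s powr (-\<beta>-1) * (s-a)^CARD('n)) * indicator {a..} s))"
    proof (cases "a \<le> s")
      case True
      then show ?thesis unfolding \<phi>_def VP_formula[OF True] using b
        by (simp add: ennreal_mult[symmetric] mult_ac)
    qed (simp add: \<phi>_def)
  qed
  also have "\<dots> = emeasure lborel (T1 :: (real^'n) set) * (ennreal \<beta> * IA a CARD('n) \<beta>)"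
    unfolding IA_def by (simp add: nn_integral_cmult)
  finally have 1: "(\<integral>\<^sup>+x. indicator (Opos :: (real^'n) set) x * (\<integral>\<^sup>+s. \<phi> s * indicator {wP a x..} s \<partial>lborel) \<partial>lborel)
      = emeasure lborel (T1 :: (real^'n) set) * (ennreal \<beta> * IA a CARD('n) \<beta>)" .
  have "(\<integral>\<^sup>+x. ennreal (pareto_unnorm a \<beta> (x :: real^'n)) \<partial>lborel)
      = (\<integral>\<^sup>+x. indicator (Opos :: (real^'n) set) x * (\<integral>\<^sup>+s. \<phi> s * indicator {wP a x..} s \<partial>lborel) \<partial>lborel)"
  proof (intro nn_integral_cong)
    fix x :: "real^'n"
    show "ennreal (pareto_unnorm a \<beta> x) = indicator Opos x * (\<integral>\<^sup>+s. \<phi> s * indicator {wP a x..} s \<partial>lborel)"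
    proof (cases "x \<in> Opos")
      case True
      have w1: "a < wP a x" by (rule wP_gt[OF True])
      have w: "a < wP a x" "0 < wP a x" using w1 a by auto
      have "(\<integral>\<^sup>+s. \<phi> s * indicator {wP a x..} s \<partial>lborel) = (\<integral>\<^sup>+s. ennreal \<beta> * (ennreal (s powr (-\<beta>-1)) * indicator {wP a x..} s) \<partial>lborel)"
        unfolding \<phi>_def using w b by (intro nn_integral_cong) (auto split: split_indicator simp: ennreal_mult)
      also have "\<dots> = ennreal \<beta> * ennreal (wP a x powr (-\<beta>) / \<beta>)"
        using Itail[OF w(2) b] by (simp add: nn_integral_cmult)
      also have "\<dots> = ennreal (wP a x powr (-\<beta>))" using b by (simp add: ennreal_mult[symmetric])
      finally show ?thesis using True by (simp add: pareto_unnorm_eq)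
    qed (simp add: pareto_unnorm_eq)
  qed
  then show ?thesis using 1 by simp
qed

locale par =
  fixes a \<beta> :: real and TYn :: "'n::finite itself"
  assumes a: "a > 0" and bn: "real CARD('n) < \<beta>"
begin

lemma b: "\<beta> > 0" using bn by (metis of_nat_0_le_iff order.strict_trans1)

definition KP :: real where "KP = enn2real (emeasure lborel (T1 :: (real^'n) set))"

lemma KP: "KP > 0" "emeasure lborel (T1 :: (real^'n) set) = ennreal KP"
  using T1_fin[where 'n='n] T1_pos[where 'n='n] unfolding KP_def
  by (auto simp: enn2real_positive_iff less_top)

definition IAr :: real where "IAr = fact CARD('n) * a powr (real CARD('n) - \<beta>) / (\<Prod>i\<le>CARD('n). (\<beta> - real i))"

lemma IAr: "IAr > 0" "IA a CARD('n) \<beta> = ennreal IAr"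
proof -
  have "(\<Prod>i\<le>CARD('n). (\<beta> - real i)) > 0"
  proof (intro prod_pos ballI)
    fix i assume "i \<in> {..CARD('n)}"
    then have "real i \<le> real CARD('n)" by simp
    then show "0 < \<beta> - real i" using bn by simp
  qed
  then show "IAr > 0" unfolding IAr_def using a by simp
  show "IA a CARD('n) \<beta> = ennreal IAr" unfolding IAr_def using IA_closed[OF a bn] .
qed

definition Z :: real where "Z = KP * (\<beta> * IAr)"

lemma Z_pos: "Z > 0" unfolding Z_def using KP IAr b by simp

lemma nnZ: "(\<integral>\<^sup>+x. ennreal (pareto_unnorm a \<beta> (x :: real^'n)) \<partial>lborel) = ennreal Z"
  using nn_pareto[OF a b, where 'n='n] KP IAr b unfolding Z_def by (simp add: ennreal_mult)

lemma Z_eq: "pareto_Z a \<beta> TYPE('n) = Z"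
proof -
  have "integrable lborel (pareto_unnorm a \<beta> :: real^'n \<Rightarrow> real) \<and> integral\<^sup>L lborel (pareto_unnorm a \<beta> :: real^'n \<Rightarrow> real) = Z"
    using nn_integral_eq_integrable[of "pareto_unnorm a \<beta> :: real^'n \<Rightarrow> real" lborel Z] nnZ Z_pos
    by (auto simp: pareto_unnorm_eq)
  then show ?thesis unfolding pareto_Z_def by simp
qed

abbreviation "fP \<equiv> (pareto_density a \<beta> :: real^'n \<Rightarrow> real)"

lemma fP_eq: "fP x = indicator Opos x * wP a x powr (-\<beta>) / Z"
  unfolding pareto_density_def Z_eq pareto_unnorm_eq ..

lemma fP_density: "is_density fP"
  unfolding is_density_def
proof (intro conjI allI)
  show "fP \<in> borel_measurable lborel" unfolding fP_eq[abs_def] by measurable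
  fix x show "0 \<le> fP x" unfolding fP_eq using Z_pos by simp
next
  have "(\<integral>\<^sup>+x. ennreal (fP x) \<partial>lborel) = (\<integral>\<^sup>+x. ennreal (1/Z) * ennreal (pareto_unnorm a \<beta> (x :: real^'n)) \<partial>lborel)"
    unfolding pareto_density_def Z_eq
  proof (intro nn_integral_cong)
    fix x :: "real^'n"
    have "0 \<le> pareto_unnorm a \<beta> x" by (simp add: pareto_unnorm_eq)
    moreover have "0 \<le> 1/Z" using Z_pos by simp
    ultimately show "ennreal (pareto_unnorm a \<beta> x / Z) = ennreal (1/Z) * ennreal (pareto_unnorm a \<beta> x)"
      by (simp add: ennreal_mult[symmetric])
  qed
  also have "\<dots> = ennreal (1/Z) * ennreal Z" by (simp add: nn_integral_cmult nnZ)
  also have "\<dots> = 1" using Z_pos by (simp add: ennreal_mult[symmetric])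
  finally show "(\<integral>\<^sup>+x. ennreal (fP x) \<partial>lborel) = 1" .
qed

end

context par
begin

definition q :: real where "q = Z powr (1/\<beta>)"

lemma q_pos: "q > 0" unfolding q_def using Z_pos by simp

lemma fP_pos_iff: "0 < fP x \<longleftrightarrow> x \<in> Opos"
proof
  assume "0 < fP x" then show "x \<in> Opos" unfolding fP_eq by (cases "x \<in> Opos") auto
next
  assume x: "x \<in> Opos"
  then have "0 < wP a x" using wP_gt[OF x, of a] a by linarith
  then show "0 < fP x" unfolding fP_eq using x Z_pos by simp
qed

lemma fP_w: "x \<in> Opos \<Longrightarrow> fP x = (q * wP a x) powr (-\<beta>)"
proof -
  assume x: "x \<in> Opos"
  then have w: "0 < wP a x" using wP_gt[OF x, of a] a by linarith
  have "(q * wP a x) powr (-\<beta>) = q powr (-\<beta>) * wP a x powr (-\<beta>)"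
    using q_pos w by (simp add: powr_mult)
  also have "q powr (-\<beta>) = 1 / Z" unfolding q_def using Z_pos b by (simp add: powr_powr powr_minus_divide)
  finally show ?thesis unfolding fP_eq using x by simp
qed

lemma fP_u: "x \<in> Opos \<Longrightarrow> fP x powr (-1/\<beta>) = q * wP a x"
proof -
  assume x: "x \<in> Opos"
  then have w: "0 < wP a x" using wP_gt[OF x, of a] a by linarith
  show ?thesis unfolding fP_w[OF x] using q_pos w b by (simp add: powr_powr)
qed

lemma wP_comb: "wP a ((1-l) *\<^sub>R x + l *\<^sub>R y) = (1-l) * wP a x + l * wP a y"
proof -
  have "(\<Sum>i\<in>UNIV. ((1-l) *\<^sub>R x + l *\<^sub>R y) $ i) = (1-l) * (\<Sum>i\<in>UNIV. x $ i) + l * (\<Sum>i\<in>UNIV. y $ i)"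
    by (simp add: sum.distrib sum_distrib_left)
  then show ?thesis unfolding wP_def by (simp add: algebra_simps)
qed

lemma Opos_comb:
  assumes x0: "x \<in> Opos" and y0: "y \<in> Opos" and l: "0 \<le> l" "l \<le> 1"
  shows "(1-l) *\<^sub>R x + l *\<^sub>R y \<in> Opos"
  unfolding Opos_def mem_Collect_eq
proof (intro allI)
  fix i
  have x: "\<forall>i. 0 < x $ i" and y: "\<forall>i. 0 < y $ i" using x0 y0 unfolding Opos_def by auto
  show "0 < ((1-l) *\<^sub>R x + l *\<^sub>R y) $ i"
  proof (cases "l = 1")
    case True then show ?thesis using y by simp
  next
    case False
    then have "0 < (1-l) * x $ i" using l x by simp
    moreover have "0 \<le> l * y $ i" using l y by (simp add: less_imp_le)
    ultimately show ?thesis by simp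
  qed
qed

lemma fP_conc: "neg_inv_concave \<beta> fP"
  unfolding neg_inv_concave_def
proof (intro conjI allI impI)
  fix x show "0 \<le> fP x" using fP_density unfolding is_density_def by simp
next
  fix x y :: "real^'n" and l :: real
  assume xy: "0 < fP x * fP y" and l: "l \<in> {0..1}"
  have fx: "0 \<le> fP x" "0 \<le> fP y" using fP_density unfolding is_density_def by auto
  from xy fx have "0 < fP x" "0 < fP y" by (auto simp: zero_less_mult_iff)
  then have x: "x \<in> Opos" and y: "y \<in> Opos" using fP_pos_iff by auto
  have z: "(1-l) *\<^sub>R x + l *\<^sub>R y \<in> Opos" using Opos_comb[OF x y] l by auto
  have "((1-l) * fP x powr (-1/\<beta>) + l * fP y powr (-1/\<beta>)) powr (-\<beta>)
       = (q * wP a ((1-l) *\<^sub>R x + l *\<^sub>R y)) powr (-\<beta>)"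
    unfolding fP_u[OF x] fP_u[OF y] wP_comb by (simp add: algebra_simps)
  also have "\<dots> = fP ((1-l) *\<^sub>R x + l *\<^sub>R y)" using fP_w[OF z] by simp
  finally show "fP ((1-l) *\<^sub>R x + l *\<^sub>R y) \<ge> ((1-l) * fP x powr (-1/\<beta>) + l * fP y powr (-1/\<beta>)) powr (-\<beta>)"
    by simp
qed

end

sublocale par \<subseteq> P: nic \<beta> "pareto_density a \<beta> :: real^'n \<Rightarrow> real"
  by unfold_locales (use fP_density fP_conc bn in auto)

context par
begin

lemma P_u: "x \<in> Opos \<Longrightarrow> P.u x = q * wP a x"
  unfolding P.u_def using fP_u by simp

lemma P_m: "P.m = q * a"
proof (rule antisym)
  show "q * a \<le> P.m"
    unfolding P.m_def
  proof (rule cInf_greatest)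
    show "P.u ` P.S \<noteq> {}" using P.S_ne by simp
    fix v assume "v \<in> P.u ` P.S"
    then obtain x where x: "x \<in> Opos" "v = P.u x" unfolding P.S_def using fP_pos_iff by auto
    have "a < wP a x" by (rule wP_gt[OF x(1)])
    then show "q * a \<le> v" unfolding x(2) P_u[OF x(1)] using q_pos by simp
  qed
next
  show "P.m \<le> q * a"
  proof (rule ccontr)
    assume "\<not> P.m \<le> q * a"
    then have gt: "P.m > q * a" by simp
    define \<epsilon> where "\<epsilon> = (P.m - q * a) / (2 * q * real CARD('n))"
    have \<epsilon>: "\<epsilon> > 0" unfolding \<epsilon>_def using gt q_pos by simp
    define x :: "real^'n" where "x = (\<chi> i. \<epsilon>)"
    have x: "x \<in> Opos" unfolding x_def Opos_def using \<epsilon> by simp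
    have "P.m \<le> P.u x" using P.u_ge_m fP_pos_iff x by blast
    also have "P.u x = q * (a + real CARD('n) * \<epsilon>)" using P_u[OF x] unfolding wP_def x_def by simp
    also have "\<dots> = q * a + (P.m - q * a) / 2" unfolding \<epsilon>_def using q_pos by (simp add: field_simps)
    finally have le: "P.m \<le> q * a + (P.m - q * a) / 2" .
    have "P.m - q * a \<le> 0" using le by (simp add: field_simps)
    then show False using gt by simp
  qed
qed

lemma P_V: "s \<ge> P.m \<Longrightarrow> P.V s = ennreal (KP / q ^ CARD('n) * (s - P.m) ^ DIM(real^'n))"
proof -
  assume s: "s \<ge> P.m"
  have L: "P.L s = LP a (s / q)"
  proof (rule set_eqI)
    fix x :: "real^'n"
    show "x \<in> P.L s \<longleftrightarrow> x \<in> LP a (s / q)"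
    proof (cases "x \<in> Opos")
      case True
      have "P.u x \<le> s \<longleftrightarrow> wP a x \<le> s / q"
        unfolding P_u[OF True] using q_pos by (simp add: pos_le_divide_eq mult.commute)
      then show ?thesis using True fP_pos_iff[of x] unfolding P.L_def LP_def by simp
    next
      case False
      then show ?thesis using fP_pos_iff[of x] unfolding P.L_def LP_def by simp
    qed
  qed
  have sa: "s / q \<ge> a" using s P_m q_pos by (simp add: pos_le_divide_eq mult.commute)
  have "P.V s = ennreal ((s/q - a) ^ CARD('n)) * ennreal KP"
    unfolding P.V_def L VP_formula[OF sa] KP(2) ..
  also have "s/q - a = (s - P.m) / q" unfolding P_m using q_pos by (simp add: diff_divide_distrib)
  also have "((s - P.m) / q) ^ CARD('n) = (s - P.m) ^ CARD('n) / q ^ CARD('n)" by (rule power_divide)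
  also have "ennreal ((s - P.m) ^ CARD('n) / q ^ CARD('n)) * ennreal KP
           = ennreal ((s - P.m) ^ CARD('n) / q ^ CARD('n) * KP)"
    using s KP q_pos by (intro ennreal_mult[symmetric]) auto
  also have "(s - P.m) ^ CARD('n) / q ^ CARD('n) * KP = KP / q ^ CARD('n) * (s - P.m) ^ DIM(real^'n)"
    by simp
  finally show ?thesis .
qed

lemma pareto_entropy:
  "diff_entropy fP = - ln (real_of_ereal (ess_sup_norm fP)) + \<beta> * (\<Sum>i=1..CARD('n). 1 / (\<beta> - real i))"
proof -
  have "KP / q ^ CARD('n) \<ge> 0" using KP q_pos by simp
  from P.entropy_eq[OF this P_V] show ?thesis by simp
qed

end

theorem corollary4p8:
  fixes \<beta> :: real
  assumes "\<beta> > real CARD('n::finite)"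
  shows "(\<forall>f :: real^'n \<Rightarrow> real. is_density f \<and> neg_inv_concave \<beta> f \<longrightarrow>
           diff_entropy f \<le> - ln (real_of_ereal (ess_sup_norm f))
                            + \<beta> * (\<Sum>i=1..CARD('n). 1 / (\<beta> - real i))) \<and>
         (\<forall>a > 0. diff_entropy (pareto_density a \<beta> :: real^'n \<Rightarrow> real)
           = - ln (real_of_ereal (ess_sup_norm (pareto_density a \<beta> :: real^'n \<Rightarrow> real)))
             + \<beta> * (\<Sum>i=1..CARD('n). 1 / (\<beta> - real i)))"
proof (intro conjI allI impI)
  fix f :: "real^'n \<Rightarrow> real"
  assume "is_density f \<and> neg_inv_concave \<beta> f"
  then interpret nic \<beta> f using assms by unfold_locales auto
  show "diff_entropy f \<le> - ln (real_of_ereal (ess_sup_norm f)) + \<beta> * (\<Sum>i=1..CARD('n). 1 / (\<beta> - real i))"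
    using entropy_bound by simp
next
  fix a :: real assume "a > 0"
  then interpret par a \<beta> "TYPE('n)" using assms by unfold_locales auto
  show "diff_entropy (pareto_density a \<beta> :: real^'n \<Rightarrow> real)
           = - ln (real_of_ereal (ess_sup_norm (pareto_density a \<beta> :: real^'n \<Rightarrow> real)))
             + \<beta> * (\<Sum>i=1..CARD('n). 1 / (\<beta> - real i))"
    by (rule pareto_entropy)
qed

end
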